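(* Let $K$ be a field, $Q$ the bipartite type $A$ quiver with vertices $y_0,x_1,\dots,x_n,y_n$ and arrows $\alpha_i\colon x_i\to y_{i-1}$, $\beta_i\colon x_i\to y_i$, $\mathbf{d}$ a dimension vector and $\mathbf{r}$ a quiver rank array with Zelevinsky permutation $v(\mathbf{r})$ and block rank matrix $\mathbf{b}=\mathbf{b}(\mathbf{r})$. Then: (1) $v(\mathbf{r})$ is the minimal length element of its $(W_P,W_P)$-double coset; (2) every box of Fulton's essential set $\mathcal{E}ss(v(\mathbf{r}))$ lies in the southeast corner of a block; (3) the length of $v(\mathbf{r})$ is $$\sum_{i=2}^{2n+1}\sum_{j=1}^{2n}\big(\mathbf{b}_{i-1,2n+1}-\mathbf{b}_{i-1,j}\big)\big(\mathbf{b}_{i,j}+\mathbf{b}_{i-1,j-1}-\mathbf{b}_{i,j-1}-\mathbf{b}_{i-1,j}\big).$$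
   Context: Setup: $\mathrm{rep}_Q(\mathbf{d})$ is the space of tuples $V=(V_a)$, $V_a\in\mathrm{Mat}_{\mathbf{d}(ha)\times\mathbf{d}(ta)}(K)$. $M_Q(V)$: block matrix with block rows $y_0,\dots,y_n$ and block columns $x_n,\dots,x_1$, $V_{\alpha_i}$ in block $(y_{i-1},x_i)$, $V_{\beta_i}$ in block $(y_i,x_i)$, zeros elsewhere; for an interval $J$ (nonempty set of consecutive vertices), $M_J(V)$ is the submatrix on block rows of the $y$-vertices and block columns of the $x$-vertices of $J$. A quiver rank array $\mathbf{r}$ is $J\mapsto\operatorname{rank}M_J(V)$ for some $V$; $\mathcal{O}_\mathbf{r}$ is the set of such $V$. $d_x=\sum\mathbf{d}(x_i)$, $d_y=\sum\mathbf{d}(y_i)$, $d=d_x+d_y$, $\zeta(V)=\begin{pmatrix}M_Q(V)&\mathbf{1}_{d_y}\\ \mathbf{1}_{d_x}&0\end{pmatrix}$. $d\times d$ matrices have row blocks of sizes $\mathbf{d}(y_0),\dots,\mathbf{d}(y_n),\mathbf{d}(x_n),\dots,\mathbf{d}(x_1)$ and column blocks of sizes $\mathbf{d}(x_n),\dots,\mathbf{d}(x_1),\mathbf{d}(y_0),\dots,\mathbf{d}(y_n)$, numbered $1..2n+1$; $Z_{i\times j}$ = block rows $1..i$, block columns $1..j$; $\mathbf{b}_{i,j}=\operatorname{rank}\zeta(V)_{i\times j}$ for $V\in\mathcal{O}_\mathbf{r}$, and $\mathbf{b}_{i,j}=0$ if $i$ or $j\notin[1,2n+1]$. $v(\mathbf{r})$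 is the unique $d\times d$ permutation matrix with exactly $\mathbf{b}_{i,j}+\mathbf{b}_{i-1,j-1}-\mathbf{b}_{i,j-1}-\mathbf{b}_{i-1,j}$ ones in block $(i,j)$ and whose ones run from northwest to southeast within each block row and each block column. A permutation $u\in S_d$ corresponds to the matrix with $1$ at $(i,u(i))$; its length is the number of inversions, equivalently the number of pairs of $1$s one of which lies strictly northeast of the other. The diagram of $u$ is the set of positions of the $d\times d$ grid with no $1$ directly north (same column, above) and no $1$ directly west (same row, left); $\mathcal{E}ss(u)$ is the set of positions $(i,j)$ in the diagram such that neither $(i+1,j)$ nor $(i,j+1)$ is in the diagram. The $(W_P,W_P)$-double coset of a permutation matrix $u$ is the set of permutation matrices obtained from $u$ by permuting rows within each block row and columns within each block column. *)

theory Defs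
  imports "Jordan_Normal_Form.DL_Rank" "HOL-Combinatorics.Permutations"
begin

definition mrank :: "'a::field mat \<Rightarrow> nat" where
  "mrank A = vec_space.rank (dim_row A) A"

(* block bookkeeping: a list of block sizes; blocks are 0-indexed here *)
definition offs :: "nat list \<Rightarrow> nat \<Rightarrow> nat" where
  "offs sz k = sum_list (take k sz)"

definition blk :: "nat list \<Rightarrow> nat \<Rightarrow> nat" where
  "blk sz p = (LEAST k. p < offs sz (Suc k))"

definition blockset :: "nat list \<Rightarrow> nat \<Rightarrow> nat set" where
  "blockset sz k = {offs sz k ..< offs sz (Suc k)}"

(* block matrix: block rows labelled by R (block of label i has rs i rows),
   block columns labelled by C (block of label k has cs k columns),
   block (i,k) filled with B i k *)
definition blkmat :: "nat list \<Rightarrow> nat list \<Rightarrow> (nat \<Rightarrow> nat) \<Rightarrow> (nat \<Rightarrow> nat)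
    \<Rightarrow> (nat \<Rightarrow> nat \<Rightarrow> 'a::zero mat) \<Rightarrow> 'a mat" where
  "blkmat R C rs cs B =
    (let rsz = map rs R; csz = map cs C in
     mat (sum_list rsz) (sum_list csz)
       (\<lambda>(p,q). let i = blk rsz p; j = blk csz q in
                 B (R ! i) (C ! j) $$ (p - offs rsz i, q - offs csz j)))"

(* Quiver y_0 <- x_1 -> y_1 <- x_2 -> ... <- x_n -> y_n.
   dy i = d(y_i) (0 \<le> i \<le> n), dx k = d(x_k) (1 \<le> k \<le> n).
   Va k = V_{alpha_k} : x_k -> y_{k-1},  Vb k = V_{beta_k} : x_k -> y_k. *)
definition is_rep :: "nat \<Rightarrow> (nat \<Rightarrow> nat) \<Rightarrow> (nat \<Rightarrow> nat)
    \<Rightarrow> (nat \<Rightarrow> 'a::field mat) \<Rightarrow> (nat \<Rightarrow> 'a mat) \<Rightarrow> bool" where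
  "is_rep n dy dx Va Vb \<longleftrightarrow>
     (\<forall>k\<in>{1..n}. Va k \<in> carrier_mat (dy (k - 1)) (dx k) \<and> Vb k \<in> carrier_mat (dy k) (dx k))"

(* the block in block row y_i, block column x_k of M_Q(V) *)
definition qblock :: "(nat \<Rightarrow> nat) \<Rightarrow> (nat \<Rightarrow> nat) \<Rightarrow> (nat \<Rightarrow> 'a::zero mat) \<Rightarrow> (nat \<Rightarrow> 'a mat)
    \<Rightarrow> nat \<Rightarrow> nat \<Rightarrow> 'a mat" where
  "qblock dy dx Va Vb i k =
     (if i + 1 = k then Va k else if i = k then Vb k else 0\<^sub>m (dy i) (dx k))"

(* vertices in linear order y_0, x_1, y_1, ..., x_n, y_n at positions 0..2n:
   y_i at position 2i, x_k at position 2k-1. An interval J = {a..b}, a \<le> b \<le> 2n.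
   M_J(V): block rows y_i (i increasing) in J, block columns x_k (k decreasing) in J. *)
definition MJ :: "nat \<Rightarrow> (nat \<Rightarrow> nat) \<Rightarrow> (nat \<Rightarrow> nat) \<Rightarrow> (nat \<Rightarrow> 'a::zero mat) \<Rightarrow> (nat \<Rightarrow> 'a mat)
    \<Rightarrow> nat \<Rightarrow> nat \<Rightarrow> 'a mat" where
  "MJ n dy dx Va Vb a b =
     blkmat (filter (\<lambda>i. a \<le> 2*i \<and> 2*i \<le> b) [0..<n+1])
            (filter (\<lambda>k. a \<le> 2*k - 1 \<and> 2*k - 1 \<le> b) (rev [1..<n+1]))
            dy dx (qblock dy dx Va Vb)"

definition MQ :: "nat \<Rightarrow> (nat \<Rightarrow> nat) \<Rightarrow> (nat \<Rightarrow> nat) \<Rightarrow> (nat \<Rightarrow> 'a::zero mat) \<Rightarrow> (nat \<Rightarrow> 'a mat)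
    \<Rightarrow> 'a mat" where
  "MQ n dy dx Va Vb = blkmat [0..<n+1] (rev [1..<n+1]) dy dx (qblock dy dx Va Vb)"

definition orbit :: "nat \<Rightarrow> (nat \<Rightarrow> nat) \<Rightarrow> (nat \<Rightarrow> nat) \<Rightarrow> (nat \<Rightarrow> nat \<Rightarrow> nat)
    \<Rightarrow> ((nat \<Rightarrow> 'a::field mat) \<times> (nat \<Rightarrow> 'a mat)) set" where
  "orbit n dy dx r = {(Va, Vb). is_rep n dy dx Va Vb \<and>
      (\<forall>a b. a \<le> b \<and> b \<le> 2*n \<longrightarrow> r a b = mrank (MJ n dy dx Va Vb a b))}"

definition qrank_array :: "'a::field itself \<Rightarrow> nat \<Rightarrow> (nat \<Rightarrow> nat) \<Rightarrow> (nat \<Rightarrow> nat)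
    \<Rightarrow> (nat \<Rightarrow> nat \<Rightarrow> nat) \<Rightarrow> bool" where
  "qrank_array _ n dy dx r \<longleftrightarrow> (orbit n dy dx r :: ((nat \<Rightarrow> 'a mat) \<times> (nat \<Rightarrow> 'a mat)) set) \<noteq> {}"

definition dY :: "nat \<Rightarrow> (nat \<Rightarrow> nat) \<Rightarrow> nat" where "dY n dy = (\<Sum>i\<le>n. dy i)"
definition dX :: "nat \<Rightarrow> (nat \<Rightarrow> nat) \<Rightarrow> nat" where "dX n dx = (\<Sum>k\<in>{1..n}. dx k)"

definition zeta :: "nat \<Rightarrow> (nat \<Rightarrow> nat) \<Rightarrow> (nat \<Rightarrow> nat) \<Rightarrow> (nat \<Rightarrow> 'a::field mat) \<Rightarrow> (nat \<Rightarrow> 'a mat)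
    \<Rightarrow> 'a mat" where
  "zeta n dy dx Va Vb =
     four_block_mat (MQ n dy dx Va Vb) (1\<^sub>m (dY n dy)) (1\<^sub>m (dX n dx)) (0\<^sub>m (dX n dx) (dY n dy))"

definition rowsz :: "nat \<Rightarrow> (nat \<Rightarrow> nat) \<Rightarrow> (nat \<Rightarrow> nat) \<Rightarrow> nat list" where
  "rowsz n dy dx = map dy [0..<n+1] @ map dx (rev [1..<n+1])"
definition colsz :: "nat \<Rightarrow> (nat \<Rightarrow> nat) \<Rightarrow> (nat \<Rightarrow> nat) \<Rightarrow> nat list" where
  "colsz n dy dx = map dx (rev [1..<n+1]) @ map dy [0..<n+1]"

definition topleft :: "nat \<Rightarrow> (nat \<Rightarrow> nat) \<Rightarrow> (nat \<Rightarrow> nat) \<Rightarrow> 'a mat \<Rightarrow> nat \<Rightarrow> nat \<Rightarrow> 'a mat" where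
  "topleft n dy dx Z i j = mat (offs (rowsz n dy dx) i) (offs (colsz n dy dx) j) (\<lambda>(p,q). Z $$ (p,q))"

(* block rank matrix b(r), blocks numbered 1..2n+1, zero outside *)
definition bmat :: "'a::field itself \<Rightarrow> nat \<Rightarrow> (nat \<Rightarrow> nat) \<Rightarrow> (nat \<Rightarrow> nat)
    \<Rightarrow> (nat \<Rightarrow> nat \<Rightarrow> nat) \<Rightarrow> nat \<Rightarrow> nat \<Rightarrow> nat" where
  "bmat _ n dy dx r i j =
     (if 1 \<le> i \<and> i \<le> 2*n+1 \<and> 1 \<le> j \<and> j \<le> 2*n+1 then
        (let V = (SOME V. V \<in> (orbit n dy dx r :: ((nat \<Rightarrow> 'a mat) \<times> (nat \<Rightarrow> 'a mat)) set))
         in mrank (topleft n dy dx (zeta n dy dx (fst V) (snd V)) i j))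
      else 0)"

definition bcount :: "(nat \<Rightarrow> nat \<Rightarrow> nat) \<Rightarrow> nat \<Rightarrow> nat \<Rightarrow> int" where
  "bcount b i j = int (b i j) + int (b (i-1) (j-1)) - int (b i (j-1)) - int (b (i-1) j)"

(* permutation u of {0..<d}: its matrix has a 1 at (p, u p) *)
definition zel_cond :: "nat list \<Rightarrow> nat list \<Rightarrow> (nat \<Rightarrow> nat \<Rightarrow> nat) \<Rightarrow> (nat \<Rightarrow> nat) \<Rightarrow> bool" where
  "zel_cond rs cs b u \<longleftrightarrow>
     u permutes {..<sum_list rs} \<and>
     (\<forall>I\<in>{1..length rs}. \<forall>J\<in>{1..length cs}.
        int (card {p \<in> blockset rs (I-1). u p \<in> blockset cs (J-1)}) = bcount b I J) \<and>
     (\<forall>I<length rs. \<forall>p\<in>blockset rs I. \<forall>p'\<in>blockset rs I. p < p' \<longrightarrow> u p < u p') \<and>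
     (\<forall>J<length cs. \<forall>p<sum_list rs. \<forall>p'<sum_list rs.
        u p \<in> blockset cs J \<and> u p' \<in> blockset cs J \<and> u p < u p' \<longrightarrow> p < p')"

definition zel :: "'a::field itself \<Rightarrow> nat \<Rightarrow> (nat \<Rightarrow> nat) \<Rightarrow> (nat \<Rightarrow> nat)
    \<Rightarrow> (nat \<Rightarrow> nat \<Rightarrow> nat) \<Rightarrow> nat \<Rightarrow> nat" where
  "zel K n dy dx r = (THE u. zel_cond (rowsz n dy dx) (colsz n dy dx) (bmat K n dy dx r) u)"

definition perm_length :: "nat \<Rightarrow> (nat \<Rightarrow> nat) \<Rightarrow> nat" where
  "perm_length d u = card {(i, j). i < j \<and> j < d \<and> u j < u i}"

(* (W_P,W_P)-double coset: permute rows within block rows, columns within block columns *)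
definition block_preserving :: "nat list \<Rightarrow> (nat \<Rightarrow> nat) \<Rightarrow> bool" where
  "block_preserving sz s \<longleftrightarrow> s permutes {..<sum_list sz} \<and>
     (\<forall>k<length sz. \<forall>p\<in>blockset sz k. s p \<in> blockset sz k)"

definition dcoset :: "nat list \<Rightarrow> nat list \<Rightarrow> (nat \<Rightarrow> nat) \<Rightarrow> (nat \<Rightarrow> nat) set" where
  "dcoset rs cs u = {t \<circ> u \<circ> s | s t. block_preserving rs s \<and> block_preserving cs t}"

definition diagram :: "nat \<Rightarrow> (nat \<Rightarrow> nat) \<Rightarrow> (nat \<times> nat) set" where
  "diagram d u = {(i, j). i < d \<and> j < d \<and> j < u i \<and> (\<forall>i'\<le>i. u i' \<noteq> j)}"

definition ess :: "nat \<Rightarrow> (nat \<Rightarrow> nat) \<Rightarrow> (nat \<times> nat) set" where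
  "ess d u = {(i, j) \<in> diagram d u. (i+1, j) \<notin> diagram d u \<and> (i, j+1) \<notin> diagram d u}"

definition se_corner :: "nat list \<Rightarrow> nat list \<Rightarrow> nat \<times> nat \<Rightarrow> bool" where
  "se_corner rs cs ij \<longleftrightarrow>
     (\<exists>k<length rs. fst ij \<in> blockset rs k \<and> fst ij + 1 = offs rs (Suc k)) \<and>
     (\<exists>l<length cs. snd ij \<in> blockset cs l \<and> snd ij + 1 = offs cs (Suc l))"

end

theory Submission
  imports Defs
begin


definition cind :: "'a::field mat \<Rightarrow> nat set \<Rightarrow> bool" where
 "cind A T \<longleftrightarrow> T \<subseteq> {..<dim_col A} \<and>
    (\<forall>c. (\<forall>i<dim_row A. (\<Sum>t\<in>T. c t * A$$(i,t)) = 0) \<longrightarrow> (\<forall>t\<in>T. c t = 0))"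

context vec_space begin

lemma cind_inj:
  fixes A :: "'a mat"
  assumes A: "A \<in> carrier_mat n k" and c: "cind A T"
  shows "inj_on (col A) T"
proof (rule inj_onI, rule ccontr)
  fix t1 t2 assume t1: "t1 \<in> T" and t2: "t2 \<in> T" and eq: "col A t1 = col A t2" and ne: "t1 \<noteq> t2"
  have T: "T \<subseteq> {..<k}" "finite T" using c A unfolding cind_def by (auto intro: finite_subset)
  define cc where "cc = (\<lambda>t. if t = t1 then (1::'a) else if t = t2 then -1 else 0)"
  have "\<forall>i<dim_row A. (\<Sum>t\<in>T. cc t * A$$(i,t)) = 0"
  proof (intro allI impI)
    fix i assume i: "i < dim_row A"
    have tk: "t1 < dim_col A" "t2 < dim_col A" using t1 t2 T A by auto
    have e: "A$$(i,t1) = A$$(i,t2)" using arg_cong[OF eq, of "\<lambda>v. v$i"] i tk by simp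
    have "(\<Sum>t\<in>T. cc t * A$$(i,t)) = (\<Sum>t\<in>T. (if t = t1 then A$$(i,t) else 0) - (if t = t2 then A$$(i,t) else 0))"
      by (rule sum.cong) (auto simp: cc_def ne)
    also have "... = A$$(i,t1) - A$$(i,t2)" using T t1 t2 by (simp add: sum_subtractf)
    finally show "(\<Sum>t\<in>T. cc t * A$$(i,t)) = 0" using e by simp
  qed
  hence "cc t1 = 0" using c t1 unfolding cind_def by blast
  thus False by (simp add: cc_def)
qed

lemma cind_lin_indpt:
  fixes A :: "'a mat"
  assumes A: "A \<in> carrier_mat n k" and c: "cind A T"
  shows "lin_indpt (col A ` T)"
proof
  assume "lin_dep (col A ` T)"
  then obtain S a v where S: "finite S" "S \<subseteq> col A ` T" "lincomb a S = 0\<^sub>v n" "v \<in> S" "a v \<noteq> 0"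
    unfolding lin_dep_def by auto
  have T: "T \<subseteq> {..<k}" "finite T" using c A unfolding cind_def by (auto intro: finite_subset)
  have inj: "inj_on (col A) T" by (rule cind_inj[OF A c])
  define T' where "T' = {t\<in>T. col A t \<in> S}"
  have imT': "col A ` T' = S" using S(2) unfolding T'_def by auto
  have injT': "inj_on (col A) T'" using inj unfolding T'_def by (auto intro: inj_on_subset)
  have car0: "col A ` T \<subseteq> carrier_vec n" using A by (auto simp: col_dim)
  have Scar: "S \<subseteq> carrier_vec n" using S(2) car0 by auto
  define cc where "cc = (\<lambda>t. if col A t \<in> S then a (col A t) else 0)"
  have "\<forall>i<dim_row A. (\<Sum>t\<in>T. cc t * A$$(i,t)) = 0"
  proof (intro allI impI)
    fix i assume i: "i < dim_row A"
    hence i': "i < n" using A by auto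
    have "(\<Sum>t\<in>T. cc t * A$$(i,t)) = (\<Sum>t\<in>T. if col A t \<in> S then a (col A t) * A$$(i,t) else 0)"
      by (rule sum.cong) (auto simp: cc_def)
    also have "... = (\<Sum>t\<in>T'. a (col A t) * A$$(i,t))"
      unfolding T'_def using T(2) by (simp add: sum.inter_filter)
    also have "... = (\<Sum>t\<in>T'. a (col A t) * (col A t) $ i)"
      by (rule sum.cong) (use T A i in \<open>auto simp: T'_def\<close>)
    also have "... = (\<Sum>x\<in>S. a x * x $ i)"
      using sum.reindex[OF injT', of "\<lambda>x. a x * x $ i"] imT' by simp
    also have "... = lincomb a S $ i" using lincomb_index[OF i' Scar] by simp
    also have "... = 0" using S(3) i' by simp
    finally show "(\<Sum>t\<in>T. cc t * A$$(i,t)) = 0" .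
  qed
  hence z: "\<forall>t\<in>T. cc t = 0" using c unfolding cind_def by blast
  obtain t0 where "t0 \<in> T" "v = col A t0" using S(2,4) by auto
  thus False using z S(4,5) by (auto simp: cc_def)
qed

lemma cind_of_lin_indpt:
  fixes A :: "'a mat"
  assumes A: "A \<in> carrier_mat n k" and T: "T \<subseteq> {..<k}" and inj: "inj_on (col A) T"
    and li: "lin_indpt (col A ` T)"
  shows "cind A T"
  unfolding cind_def
proof (intro conjI allI impI ballI)
  show "T \<subseteq> {..<dim_col A}" using T A by auto
  fix c t assume h: "\<forall>i<dim_row A. (\<Sum>t\<in>T. c t * A$$(i,t)) = 0" and t: "t \<in> T"
  define a where "a = (\<lambda>x. c (the_inv_into T (col A) x))"
  have finT: "finite T" using T finite_subset by blast
  have fin: "finite (col A ` T)" using finT by simp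
  have car: "col A ` T \<subseteq> carrier_vec n" using A by (auto simp: col_dim)
  have "lincomb a (col A ` T) = 0\<^sub>v n"
  proof (rule eq_vecI)
    show "dim_vec (lincomb a (col A ` T)) = dim_vec (0\<^sub>v n)" using lincomb_dim[OF fin car] by simp
    fix i assume "i < dim_vec (0\<^sub>v n)" hence i: "i<n" by simp
    have "lincomb a (col A ` T) $ i = (\<Sum>x\<in>col A ` T. a x * x $ i)" by (rule lincomb_index[OF i car])
    also have "... = (\<Sum>t\<in>T. a (col A t) * col A t $ i)"
      using sum.reindex[OF inj, of "\<lambda>x. a x * x $ i"] by simp
    also have "... = (\<Sum>t\<in>T. c t * A$$(i,t))"
      by (rule sum.cong) (use T A i inj in \<open>auto simp: a_def the_inv_into_f_f\<close>)
    also have "... = 0" using h i A by auto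
    finally show "lincomb a (col A ` T) $ i = 0\<^sub>v n $ i" using i by simp
  qed
  then have "a \<in> col A ` T \<rightarrow> {0}" using not_lindepD[OF li fin subset_refl] by auto
  then have "a (col A t) = 0" using t by auto
  then show "c t = 0" using t inj by (auto simp: a_def the_inv_into_f_f)
qed

lemma set_cols_eq: "set (cols (A::'a mat)) = col A ` {..<dim_col A}"
  unfolding cols_def by auto

lemma cind_card_le_rank:
  fixes A :: "'a mat"
  assumes A: "A \<in> carrier_mat n k" and c: "cind A T"
  shows "card T \<le> rank A"
proof -
  have T: "T \<subseteq> {..<k}" using c A unfolding cind_def by auto
  have "col A ` T \<subseteq> set (cols A)" using T A unfolding set_cols_eq by auto
  from rank_ge_card_indpt[OF A this cind_lin_indpt[OF A c]]
  show ?thesis using card_image[OF cind_inj[OF A c]] by simp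
qed

lemma cind_extend:
  fixes A :: "'a mat"
  assumes A: "A \<in> carrier_mat n k" and c: "cind A T1"
  shows "\<exists>T. T1 \<subseteq> T \<and> T \<subseteq> {..<k} \<and> cind A T \<and> card T = rank A"
proof -
  have T1: "T1 \<subseteq> {..<k}" "finite T1" using c A unfolding cind_def by (auto intro: finite_subset)
  define U where "U = col A ` T1"
  have Usub: "U \<subseteq> set (cols A)" using T1 A unfolding U_def set_cols_eq by auto
  have Uli: "lin_indpt U" unfolding U_def by (rule cind_lin_indpt[OF A c])
  obtain S where S: "finite S" "maximal S (\<lambda>T. T \<subseteq> set (cols A) \<and> lin_indpt T)" "U \<subseteq> S"
    using maximal_exists_superset[of "set (cols A)" "\<lambda>T. T \<subseteq> set (cols A) \<and> lin_indpt T" U]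
      Usub Uli by auto
  have Ssub: "S \<subseteq> set (cols A)" and Sli: "lin_indpt S" using S(2) unfolding maximal_def by auto
  have rk: "rank A = card S" by (rule rank_card_indpt[OF A S(2)])
  define g where "g = (\<lambda>x. SOME t. t < k \<and> col A t = x)"
  have g: "x \<in> S \<Longrightarrow> g x < k \<and> col A (g x) = x" for x
  proof -
    assume "x \<in> S"
    then obtain t where "t < k" "col A t = x" using Ssub A unfolding set_cols_eq by auto
    thus ?thesis using someI[of "\<lambda>t. t < k \<and> col A t = x" t] unfolding g_def by blast
  qed
  define T where "T = T1 \<union> g ` (S - U)"
  have finT: "finite T" unfolding T_def using T1 S(1) by auto
  have Tk: "T \<subseteq> {..<k}" unfolding T_def using T1 g by auto
  have im: "col A ` T = S"
  proof -
    have "col A ` (g ` (S - U)) = S - U" using g by (force simp: image_image)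
    have "col A ` T = U \<union> col A ` (g ` (S - U))" unfolding T_def U_def by (simp add: image_Un)
    also have "... = S" using \<open>col A ` (g ` (S - U)) = S - U\<close> S(3) by auto
    finally show ?thesis .
  qed
  have injT1: "inj_on (col A) T1" by (rule cind_inj[OF A c])
  have "card T \<le> card T1 + card (g ` (S - U))" unfolding T_def by (rule card_Un_le)
  also have "... \<le> card U + card (S - U)"
    using card_image[OF injT1] card_image_le[OF finite_Diff[OF S(1)], of g] unfolding U_def by simp
  also have "... = card S" using S(1,3) by (metis card_Diff_subset finite_subset le_add_diff_inverse card_mono)
  finally have le: "card T \<le> card S" .
  have "card S \<le> card T" using card_image_le[OF finT, of "col A"] im by simp
  hence cT: "card T = card S" using le by simp
  have injT: "inj_on (col A) T" using eq_card_imp_inj_on[OF finT, of "col A"] im cT by simp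
  have "cind A T" by (rule cind_of_lin_indpt[OF A Tk injT]) (use im Sli in simp)
  thus ?thesis using Tk cT rk T_def by auto
qed

lemma rank_le_nr:
  fixes A :: "'a mat"
  assumes A: "A \<in> carrier_mat n k"
  shows "rank A \<le> n"
proof -
  have "cind A {}" unfolding cind_def by auto
  then obtain T where T: "T \<subseteq> {..<k}" "cind A T" "card T = rank A" using cind_extend[OF A] by blast
  have car: "col A ` T \<subseteq> carrier_vec n" using A by (auto simp: col_dim)
  have "card (col A ` T) \<le> dim" using li_le_dim(2)[OF fin_dim car cind_lin_indpt[OF A T(2)]] .
  thus ?thesis using card_image[OF cind_inj[OF A T(2)]] T(3) dim_is_n by simp
qed

end

lemma mrank_ge: "cind A T \<Longrightarrow> card T \<le> mrank A"
  unfolding mrank_def by (rule vec_space.cind_card_le_rank[of A "dim_row A" "dim_col A"]) auto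

lemma mrank_extend: "cind A T1 \<Longrightarrow> \<exists>T. T1 \<subseteq> T \<and> T \<subseteq> {..<dim_col A} \<and> cind A T \<and> card T = mrank A"
  unfolding mrank_def by (rule vec_space.cind_extend[of A "dim_row A" "dim_col A"]) auto

lemma mrank_le_rows: "mrank A \<le> dim_row A"
  unfolding mrank_def by (rule vec_space.rank_le_nr[of A "dim_row A" "dim_col A"]) auto

lemma mrank_le_cols: "mrank (A::'a::field mat) \<le> dim_col A"
  unfolding mrank_def by (rule vec_space.rank_le_nc[of A "dim_row A" "dim_col A"]) auto


definition subm :: "'a mat \<Rightarrow> nat \<Rightarrow> nat \<Rightarrow> 'a mat" where
  "subm Z m k = mat m k (\<lambda>(p,q). Z $$ (p,q))"

definition zind :: "'a::field mat \<Rightarrow> nat \<Rightarrow> nat set \<Rightarrow> bool" where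
  "zind Z m T \<longleftrightarrow> (\<forall>c. (\<forall>i<m. (\<Sum>t\<in>T. c t * Z$$(i,t)) = 0) \<longrightarrow> (\<forall>t\<in>T. c t = 0))"

definition rk :: "'a::field mat \<Rightarrow> nat \<Rightarrow> nat \<Rightarrow> nat" where
  "rk Z m k = mrank (subm Z m k)"

lemma cind_subm: "cind (subm Z m k) T \<longleftrightarrow> T \<subseteq> {..<k} \<and> zind Z m T"
proof -
  have "T \<subseteq> {..<k} \<Longrightarrow> i < m \<Longrightarrow> (\<Sum>t\<in>T. c t * subm Z m k $$ (i,t)) = (\<Sum>t\<in>T. c t * Z $$ (i,t))" for c i
    by (rule sum.cong) (auto simp: subm_def)
  thus ?thesis unfolding cind_def zind_def by (auto simp: subm_def)
qed

lemma zind_empty: "zind Z m {}" unfolding zind_def by auto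

lemma zind_mono_rows: "m1 \<le> m2 \<Longrightarrow> zind Z m1 T \<Longrightarrow> zind Z m2 T"
  unfolding zind_def by auto

lemma zind_subset:
  assumes "T' \<subseteq> T" "finite T" "zind Z m T" shows "zind Z m T'"
  unfolding zind_def
proof (intro allI impI ballI)
  fix c t assume h: "\<forall>i<m. (\<Sum>t\<in>T'. c t * Z$$(i,t)) = 0" and t: "t \<in> T'"
  define c' where "c' = (\<lambda>t. if t \<in> T' then c t else 0)"
  have "\<forall>i<m. (\<Sum>t\<in>T. c' t * Z$$(i,t)) = 0"
  proof (intro allI impI)
    fix i assume i: "i < m"
    have "(\<Sum>t\<in>T. c' t * Z$$(i,t)) = (\<Sum>t\<in>T'. c' t * Z$$(i,t))"
      by (rule sum.mono_neutral_right) (use assms in \<open>auto simp: c'_def\<close>)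
    also have "... = (\<Sum>t\<in>T'. c t * Z$$(i,t))" by (rule sum.cong) (auto simp: c'_def)
    finally show "(\<Sum>t\<in>T. c' t * Z$$(i,t)) = 0" using h i by simp
  qed
  hence "c' t = 0" using assms(3) t assms(1) unfolding zind_def by blast
  thus "c t = 0" using t by (simp add: c'_def)
qed

lemma rk_ge: "T \<subseteq> {..<k} \<Longrightarrow> zind Z m T \<Longrightarrow> card T \<le> rk Z m k"
  unfolding rk_def by (rule mrank_ge) (simp add: cind_subm)

lemma rk_extend:
  assumes "T1 \<subseteq> {..<k}" "zind Z m T1"
  shows "\<exists>T. T1 \<subseteq> T \<and> T \<subseteq> {..<k} \<and> zind Z m T \<and> card T = rk Z m k"
proof -
  have "cind (subm Z m k) T1" using assms by (simp add: cind_subm)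
  from mrank_extend[OF this] obtain T where "T1 \<subseteq> T" "cind (subm Z m k) T" "card T = mrank (subm Z m k)"
    by blast
  thus ?thesis unfolding rk_def by (auto simp: cind_subm)
qed

lemma rk_le_rows: "rk Z m k \<le> m"
  unfolding rk_def using mrank_le_rows[of "subm Z m k"] by (simp add: subm_def)

lemma rk_le_cols: "rk Z m k \<le> k"
  unfolding rk_def using mrank_le_cols[of "subm Z m k"] by (simp add: subm_def)

lemma zind_span:
  fixes Z :: "'a::field mat"
  assumes fin: "finite T1" and z: "zind Z m T1" and s: "s \<notin> T1" and nz: "\<not> zind Z m (insert s T1)"
  shows "\<exists>e. \<forall>i<m. Z$$(i,s) = (\<Sum>t\<in>T1. e t * Z$$(i,t))"
proof -
  obtain c where c: "\<forall>i<m. (\<Sum>t\<in>insert s T1. c t * Z$$(i,t)) = 0" and t0: "\<exists>t\<in>insert s T1. c t \<noteq> 0"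
    using nz unfolding zind_def by blast
  have c2: "\<forall>i<m. c s * Z$$(i,s) + (\<Sum>t\<in>T1. c t * Z$$(i,t)) = 0"
    using c fin s by (simp add: sum.insert)
  have cs: "c s \<noteq> 0"
  proof
    assume "c s = 0"
    hence "\<forall>i<m. (\<Sum>t\<in>T1. c t * Z$$(i,t)) = 0" using c2 by simp
    hence "\<forall>t\<in>T1. c t = 0" using z unfolding zind_def by blast
    thus False using t0 \<open>c s = 0\<close> by auto
  qed
  show ?thesis
  proof (intro exI allI impI)
    fix i assume i: "i < m"
    have "(\<Sum>t\<in>T1. (- c t / c s) * Z$$(i,t)) = (- 1 / c s) * (\<Sum>t\<in>T1. c t * Z$$(i,t))"
      by (simp add: sum_distrib_left)
    also have "... = (- 1 / c s) * (- (c s * Z$$(i,s)))" using c2 i by (metis add_eq_0_iff)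
    also have "... = Z$$(i,s)" using cs by (simp add: field_simps)
    finally show "Z$$(i,s) = (\<Sum>t\<in>T1. (- c t / c s) * Z$$(i,t))" by simp
  qed
qed

lemma rk_submod:
  fixes Z :: "'a::field mat"
  assumes m: "m1 \<le> m2" and k: "k1 \<le> k2"
  shows "rk Z m2 k1 + rk Z m1 k2 \<le> rk Z m2 k2 + rk Z m1 k1"
proof -
  obtain T1 where T1: "T1 \<subseteq> {..<k1}" "zind Z m1 T1" "card T1 = rk Z m1 k1"
    using rk_extend[of "{}" k1 Z m1] zind_empty by auto
  have T1k2: "T1 \<subseteq> {..<k2}" using T1(1) k by auto
  obtain T12 where T12: "T1 \<subseteq> T12" "T12 \<subseteq> {..<k2}" "zind Z m1 T12" "card T12 = rk Z m1 k2"
    using rk_extend[OF T1k2 T1(2)] by blast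
  obtain T13 where T13: "T1 \<subseteq> T13" "T13 \<subseteq> {..<k1}" "zind Z m2 T13" "card T13 = rk Z m2 k1"
    using rk_extend[of T1 k1 Z m2] T1 zind_mono_rows[OF m] by auto
  have fin1: "finite T1" and fin12: "finite T12" and fin13: "finite T13"
    using T1 T12 T13 by (auto intro: finite_subset)
  have notin: "\<not> zind Z m1 (insert x T1)" if x: "x \<in> T13" "x \<notin> T1" for x
  proof
    assume "zind Z m1 (insert x T1)"
    hence "card (insert x T1) \<le> rk Z m1 k1" using rk_ge[of "insert x T1" k1 Z m1] T1 T13 x by auto
    thus False using T1(3) x fin1 by simp
  qed
  have inter: "T13 \<inter> T12 = T1"
  proof
    show "T13 \<inter> T12 \<subseteq> T1"
    proof
      fix x assume x: "x \<in> T13 \<inter> T12"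
      show "x \<in> T1"
      proof (rule ccontr)
        assume "x \<notin> T1"
        moreover have "zind Z m1 (insert x T1)" by (rule zind_subset[OF _ fin12 T12(3)]) (use x T12 in auto)
        ultimately show False using notin x by auto
      qed
    qed
  qed (use T12 T13 in auto)
  have "\<forall>s\<in>T13 - T1. \<exists>e. \<forall>i<m1. Z$$(i,s) = (\<Sum>t\<in>T1. e t * Z$$(i,t))"
    using zind_span[OF fin1 T1(2)] notin by blast
  then obtain E where E: "\<And>s i. s \<in> T13 - T1 \<Longrightarrow> i < m1 \<Longrightarrow> Z$$(i,s) = (\<Sum>t\<in>T1. E s t * Z$$(i,t))"
    by metis
  define T2 where "T2 = T12 - T1"
  define T3 where "T3 = T13 - T1"
  have d1: "T13 \<union> T12 = T13 \<union> T2" unfolding T2_def using T13 by auto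
  have d2: "T13 \<inter> T2 = {}" unfolding T2_def using inter by auto
  have d3: "T12 = T1 \<union> T2" "T1 \<inter> T2 = {}" unfolding T2_def using T12 by auto
  have d4: "T13 = T1 \<union> T3" "T1 \<inter> T3 = {}" unfolding T3_def using T13 by auto
  have fin2: "finite T2" and fin3: "finite T3" unfolding T2_def T3_def using fin12 fin13 by auto
  have zU: "zind Z m2 (T13 \<union> T12)"
    unfolding zind_def
  proof (intro allI impI)
    fix c assume h: "\<forall>i<m2. (\<Sum>t\<in>T13 \<union> T12. c t * Z$$(i,t)) = 0"
    have split: "(\<Sum>t\<in>T13 \<union> T12. c t * Z$$(i,t)) = (\<Sum>t\<in>T1. c t * Z$$(i,t)) + (\<Sum>t\<in>T3. c t * Z$$(i,t)) + (\<Sum>t\<in>T2. c t * Z$$(i,t))" for i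
      unfolding d1 using d2 d4 fin1 fin2 fin3 by (simp add: sum.union_disjoint)
    define c'' where "c'' = (\<lambda>t. if t \<in> T1 then c t + (\<Sum>s\<in>T3. c s * E s t) else c t)"
    have "\<forall>i<m1. (\<Sum>t\<in>T12. c'' t * Z$$(i,t)) = 0"
    proof (intro allI impI)
      fix i assume i: "i < m1"
      have "(\<Sum>t\<in>T12. c'' t * Z$$(i,t)) = (\<Sum>t\<in>T1. c'' t * Z$$(i,t)) + (\<Sum>t\<in>T2. c'' t * Z$$(i,t))"
        unfolding d3(1) using d3(2) fin1 fin2 by (simp add: sum.union_disjoint)
      also have "(\<Sum>t\<in>T2. c'' t * Z$$(i,t)) = (\<Sum>t\<in>T2. c t * Z$$(i,t))"
        by (rule sum.cong) (use d3 in \<open>auto simp: c''_def\<close>)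
      also have "(\<Sum>t\<in>T1. c'' t * Z$$(i,t)) = (\<Sum>t\<in>T1. c t * Z$$(i,t)) + (\<Sum>t\<in>T1. (\<Sum>s\<in>T3. c s * E s t) * Z$$(i,t))"
        by (simp add: c''_def sum.distrib distrib_right)
      also have "(\<Sum>t\<in>T1. (\<Sum>s\<in>T3. c s * E s t) * Z$$(i,t)) = (\<Sum>s\<in>T3. c s * (\<Sum>t\<in>T1. E s t * Z$$(i,t)))"
        by (simp add: sum_distrib_left sum_distrib_right sum.swap[of _ T1] mult.assoc)
      also have "... = (\<Sum>s\<in>T3. c s * Z$$(i,s))"
        by (rule sum.cong) (use E i in \<open>auto simp: T3_def\<close>)
      finally show "(\<Sum>t\<in>T12. c'' t * Z$$(i,t)) = 0" using split[of i] h i m by simp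
    qed
    hence "\<forall>t\<in>T12. c'' t = 0" using T12(3) unfolding zind_def by blast
    hence c2: "\<forall>t\<in>T2. c t = 0"
    proof (intro ballI)
      fix t assume "\<forall>t\<in>T12. c'' t = 0" "t \<in> T2"
      moreover have "t \<notin> T1" "t \<in> T12" using \<open>t \<in> T2\<close> d3 by auto
      ultimately show "c t = 0" by (auto simp: c''_def)
    qed
    have "\<forall>i<m2. (\<Sum>t\<in>T13. c t * Z$$(i,t)) = 0"
    proof (intro allI impI)
      fix i assume i: "i < m2"
      have "(\<Sum>t\<in>T13 \<union> T2. c t * Z$$(i,t)) = (\<Sum>t\<in>T13. c t * Z$$(i,t)) + (\<Sum>t\<in>T2. c t * Z$$(i,t))"
        using d2 fin13 fin2 by (simp add: sum.union_disjoint)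
      moreover have "(\<Sum>t\<in>T2. c t * Z$$(i,t)) = 0" using c2 by simp
      ultimately show "(\<Sum>t\<in>T13. c t * Z$$(i,t)) = 0" using h i d1 by simp
    qed
    hence "\<forall>t\<in>T13. c t = 0" using T13(3) unfolding zind_def by blast
    thus "\<forall>t\<in>T13 \<union> T12. c t = 0" using c2 d1 by auto
  qed
  have "card (T13 \<union> T12) \<le> rk Z m2 k2" by (rule rk_ge[OF _ zU]) (use T12 T13 k in auto)
  moreover have "card (T13 \<union> T12) + card (T13 \<inter> T12) = card T13 + card T12"
    using card_Un_Int[OF fin13 fin12] by simp
  ultimately show ?thesis using inter T1 T12 T13 by simp
qed


lemma sum_single:
  assumes "finite T" "s \<in> T" "\<And>t. t \<in> T \<Longrightarrow> t \<noteq> s \<Longrightarrow> f t = 0"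
  shows "sum f T = f s"
proof -
  have "sum f T = f s + sum f (T - {s})" using assms by (simp add: sum.remove)
  also have "sum f (T - {s}) = 0" using assms by (intro sum.neutral) auto
  finally show ?thesis by simp
qed

locale zshape =
  fixes Z :: "'a::field mat" and a bb :: nat
  assumes Zr: "\<And>i j. i < a \<Longrightarrow> bb \<le> j \<Longrightarrow> j < bb + a \<Longrightarrow> Z$$(i,j) = (if i = j - bb then 1 else 0)"
    and Zl: "\<And>i j. a \<le> i \<Longrightarrow> i < a + bb \<Longrightarrow> j < bb \<Longrightarrow> Z$$(i,j) = (if i - a = j then 1 else 0)"
    and Z0: "\<And>i j. a \<le> i \<Longrightarrow> i < a + bb \<Longrightarrow> bb \<le> j \<Longrightarrow> j < bb + a \<Longrightarrow> Z$$(i,j) = 0"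
begin

lemma rk_rows_full:
  assumes m: "m \<le> a + bb"
  shows "rk Z m (bb + a) = m"
proof -
  define T where "T = (\<lambda>p. bb + p) ` {..<min m a} \<union> {..<m - a}"
  have finT: "finite T" unfolding T_def by auto
  have zT: "zind Z m T"
    unfolding zind_def
  proof (intro allI impI)
    fix c assume h: "\<forall>i<m. (\<Sum>t\<in>T. c t * Z$$(i,t)) = 0"
    have c1: "c q = 0" if q: "q < m - a" for q
    proof -
      have "(\<Sum>t\<in>T. c t * Z$$(a+q,t)) = c q * Z$$(a+q,q)"
      proof (rule sum_single[OF finT])
        show "q \<in> T" using q unfolding T_def by auto
        fix t assume t: "t \<in> T" "t \<noteq> q"
        show "c t * Z$$(a+q,t) = 0"
        proof (cases "t < m - a")
          case True thus ?thesis using Zl[of "a+q" t] q m t by auto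
        next
          case False
          then obtain p where "p < min m a" "t = bb + p" using t unfolding T_def by auto
          thus ?thesis using Z0[of "a+q" t] q m by auto
        qed
      qed
      moreover have "Z$$(a+q,q) = 1" using Zl[of "a+q" q] q m by auto
      ultimately show "c q = 0" using h q by auto
    qed
    have c2: "c (bb + p) = 0" if p: "p < min m a" for p
    proof -
      have "(\<Sum>t\<in>T. c t * Z$$(p,t)) = c (bb+p) * Z$$(p,bb+p)"
      proof (rule sum_single[OF finT])
        show "bb + p \<in> T" using p unfolding T_def by auto
        fix t assume t: "t \<in> T" "t \<noteq> bb + p"
        show "c t * Z$$(p,t) = 0"
        proof (cases "t < m - a")
          case True thus ?thesis using c1 by auto
        next
          case False
          then obtain p' where "p' < min m a" "t = bb + p'" using t unfolding T_def by auto
          thus ?thesis using Zr[of p t] p t by auto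
        qed
      qed
      moreover have "Z$$(p,bb+p) = 1" using Zr[of p "bb+p"] p by auto
      ultimately show "c (bb+p) = 0" using h p by auto
    qed
    show "\<forall>t\<in>T. c t = 0" using c1 c2 unfolding T_def by auto
  qed
  have Tk: "T \<subseteq> {..<bb + a}" unfolding T_def using m by auto
  have "card T = min m a + (m - a)"
  proof -
    have "card T = card ((\<lambda>p. bb + p) ` {..<min m a}) + card {..<m - a}"
      unfolding T_def by (rule card_Un_disjoint) (use m in auto)
    also have "card ((\<lambda>p. bb + p) ` {..<min m a}) = min m a" by (simp add: card_image)
    finally show ?thesis by simp
  qed
  hence cT: "card T = m" by simp
  show ?thesis using rk_ge[OF Tk zT] cT rk_le_rows[of Z m "bb+a"] by simp
qed

lemma rk_cols_full:
  assumes k: "k \<le> bb + a"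
  shows "rk Z (a + bb) k = k"
proof -
  define T where "T = {..<k}"
  have finT: "finite T" unfolding T_def by auto
  have zT: "zind Z (a+bb) T"
    unfolding zind_def
  proof (intro allI impI)
    fix c assume h: "\<forall>i<a+bb. (\<Sum>t\<in>T. c t * Z$$(i,t)) = 0"
    have c1: "c q = 0" if q: "q < k" "q < bb" for q
    proof -
      have "(\<Sum>t\<in>T. c t * Z$$(a+q,t)) = c q * Z$$(a+q,q)"
      proof (rule sum_single[OF finT])
        show "q \<in> T" using q unfolding T_def by auto
        fix t assume t: "t \<in> T" "t \<noteq> q"
        show "c t * Z$$(a+q,t) = 0"
        proof (cases "t < bb")
          case True thus ?thesis using Zl[of "a+q" t] q t by auto
        next
          case False thus ?thesis using Z0[of "a+q" t] q k t unfolding T_def by auto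
        qed
      qed
      moreover have "Z$$(a+q,q) = 1" using Zl[of "a+q" q] q by auto
      ultimately show "c q = 0" using h q by auto
    qed
    have c2: "c t0 = 0" if t0: "t0 < k" "bb \<le> t0" for t0
    proof -
      have "(\<Sum>t\<in>T. c t * Z$$(t0 - bb,t)) = c t0 * Z$$(t0 - bb,t0)"
      proof (rule sum_single[OF finT])
        show "t0 \<in> T" using t0 unfolding T_def by auto
        fix t assume t: "t \<in> T" "t \<noteq> t0"
        show "c t * Z$$(t0 - bb,t) = 0"
        proof (cases "t < bb")
          case True thus ?thesis using c1 t unfolding T_def by auto
        next
          case False thus ?thesis using Zr[of "t0 - bb" t] t0 t k unfolding T_def by auto
        qed
      qed
      moreover have "Z$$(t0 - bb,t0) = 1" using Zr[of "t0 - bb" t0] t0 k by auto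
      ultimately show "c t0 = 0" using h t0 k by auto
    qed
    show "\<forall>t\<in>T. c t = 0" using c1 c2 unfolding T_def by (meson lessThan_iff not_le)
  qed
  have Tk: "T \<subseteq> {..<k}" unfolding T_def by auto
  show ?thesis using rk_ge[OF Tk zT] rk_le_cols[of Z "a+bb" k] by (simp add: T_def)
qed

end

lemma sum_dy: "sum_list (map dy [0..<n+1]) = dY n dy"
proof -
  have "sum_list (map dy [0..<n+1]) = sum dy {0..<n+1}" using sum_set_upt_conv_sum_list_nat[of dy 0 "n+1"] by simp
  also have "{0..<n+1} = {..n}" by auto
  finally show ?thesis unfolding dY_def .
qed

lemma sum_dx: "sum_list (map dx (rev [1..<n+1])) = dX n dx"
proof -
  have "sum_list (map dx (rev [1..<n+1])) = sum_list (map dx [1..<n+1])"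
    by (simp add: rev_map[symmetric] sum_list_rev)
  also have "... = sum dx {1..<n+1}" using sum_set_upt_conv_sum_list_nat[of dx 1 "n+1", unfolded set_upt] by (rule sym)
  also have "{1..<n+1} = {1..n}" by auto
  finally show ?thesis unfolding dX_def .
qed

lemma MQ_dims: "dim_row (MQ n dy dx Va Vb) = dY n dy" "dim_col (MQ n dy dx Va Vb) = dX n dx"
  unfolding MQ_def blkmat_def Let_def using sum_dy[of dy n] sum_dx[of dx n] by simp_all

lemma zeta_shape: "zshape (zeta n dy dx Va Vb) (dY n dy) (dX n dx)"
  unfolding zshape_def zeta_def using MQ_dims[of n dy dx Va Vb] by auto



lemma offs_0[simp]: "offs sz 0 = 0" by (simp add: offs_def)

lemma offs_mono: "i \<le> j \<Longrightarrow> offs sz i \<le> offs sz j"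
proof -
  assume "i \<le> j"
  then obtain k where "j = i + k" by (metis le_add_diff_inverse)
  thus ?thesis by (simp add: offs_def take_add)
qed

lemma offs_Suc: "k < length sz \<Longrightarrow> offs sz (Suc k) = offs sz k + sz ! k"
  by (simp add: offs_def take_Suc_conv_app_nth)

lemma offs_ge: "length sz \<le> i \<Longrightarrow> offs sz i = sum_list sz"
  by (simp add: offs_def)

lemma offs_le_sum: "offs sz i \<le> sum_list sz"
  using offs_mono[of i "max i (length sz)" sz] offs_ge[of sz "max i (length sz)"] by simp

lemma blk_less:
  assumes p: "p < sum_list sz"
  shows "p < offs sz I \<longleftrightarrow> blk sz p < I"
proof
  assume h: "p < offs sz I"
  show "blk sz p < I"
  proof (cases I)
    case 0 thus ?thesis using h by simp
  next
    case (Suc I')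
    have "blk sz p \<le> I'" unfolding blk_def by (rule Least_le) (use h Suc in simp)
    thus ?thesis using Suc by simp
  qed
next
  assume h: "blk sz p < I"
  have ex: "p < offs sz (Suc (length sz))" using p offs_ge[of sz "Suc (length sz)"] by simp
  have "p < offs sz (Suc (blk sz p))" unfolding blk_def by (rule LeastI[of _ "length sz"]) (rule ex)
  also have "... \<le> offs sz I" using h by (intro offs_mono) simp
  finally show "p < offs sz I" .
qed

lemma blk_lt_len: "p < sum_list sz \<Longrightarrow> blk sz p < length sz"
  using blk_less[of p sz "length sz"] offs_ge[of sz "length sz"] by simp

lemma blk_in: "p < sum_list sz \<Longrightarrow> offs sz (blk sz p) \<le> p \<and> p < offs sz (Suc (blk sz p))"
  using blk_less[of p sz "blk sz p"] blk_less[of p sz "Suc (blk sz p)"] by simp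

lemma blockset_iff: "p < sum_list sz \<Longrightarrow> p \<in> blockset sz k \<longleftrightarrow> blk sz p = k"
  unfolding blockset_def using blk_less[of p sz k] blk_less[of p sz "Suc k"] by auto

lemma blockset_lt: "p \<in> blockset sz k \<Longrightarrow> p < sum_list sz"
  unfolding blockset_def using offs_le_sum[of sz "Suc k"] by auto

lemma blk_mono: "p \<le> p' \<Longrightarrow> p' < sum_list sz \<Longrightarrow> blk sz p \<le> blk sz p'"
proof -
  assume h: "p \<le> p'" "p' < sum_list sz"
  have "p' < offs sz (Suc (blk sz p'))" using blk_in[OF h(2)] by simp
  hence "p < offs sz (Suc (blk sz p'))" using h by simp
  hence "blk sz p < Suc (blk sz p')" using blk_less[of p sz] h by simp
  thus ?thesis by simp
qed

lemma blk_eqI: "offs sz k \<le> p \<Longrightarrow> p < offs sz (Suc k) \<Longrightarrow> blk sz p = k"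
  using blockset_iff[of p sz k] blockset_lt[of p sz k] unfolding blockset_def by auto

lemma card_less_sum:
  assumes "finite {x. P x}"
  shows "card {x. P x \<and> f x < n} = (\<Sum>k<n. card {x. P x \<and> f x = (k::nat)})"
proof (induction n)
  case 0 thus ?case by simp
next
  case (Suc n)
  have "{x. P x \<and> f x < Suc n} = {x. P x \<and> f x < n} \<union> {x. P x \<and> f x = n}" by auto
  moreover have "card ({x. P x \<and> f x < n} \<union> {x. P x \<and> f x = n}) = card {x. P x \<and> f x < n} + card {x. P x \<and> f x = n}"
  proof -
    have f1: "finite {x. P x \<and> f x < n}" by (rule finite_subset[OF _ assms]) auto
    have f2: "finite {x. P x \<and> f x = n}" by (rule finite_subset[OF _ assms]) auto
    show ?thesis using card_Un_disjoint[OF f1 f2] by auto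
  qed
  ultimately show ?case using Suc by simp
qed

lemma tele1: "(\<Sum>J<J0. bcount b (Suc I) (Suc J)) =
   (int (b (Suc I) J0) - int (b I J0)) - (int (b (Suc I) 0) - int (b I 0))"
proof -
  have "(\<Sum>J<J0. bcount b (Suc I) (Suc J)) = (\<Sum>J<J0. (\<lambda>J. int (b (Suc I) J) - int (b I J)) (Suc J) - (\<lambda>J. int (b (Suc I) J) - int (b I J)) J)"
    by (rule sum.cong) (auto simp: bcount_def)
  also have "... = (int (b (Suc I) J0) - int (b I J0)) - (int (b (Suc I) 0) - int (b I 0))"
    by (rule sum_lessThan_telescope)
  finally show ?thesis .
qed

lemma tele2: "(\<Sum>I<I0. \<Sum>J<J0. bcount b (Suc I) (Suc J)) =
   int (b I0 J0) - int (b 0 J0) - int (b I0 0) + int (b 0 0)"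
proof -
  have "(\<Sum>I<I0. \<Sum>J<J0. bcount b (Suc I) (Suc J)) = (\<Sum>I<I0. (\<lambda>I. int (b I J0) - int (b I 0)) (Suc I) - (\<lambda>I. int (b I J0) - int (b I 0)) I)"
    by (rule sum.cong) (auto simp: tele1)
  also have "... = (int (b I0 J0) - int (b I0 0)) - (int (b 0 J0) - int (b 0 0))"
    by (rule sum_lessThan_telescope)
  finally show ?thesis by simp
qed

definition key :: "(nat \<Rightarrow> nat) \<Rightarrow> nat \<Rightarrow> nat \<Rightarrow> bool" where
  "key J p' p \<longleftrightarrow> J p' < J p \<or> (J p' = J p \<and> p' < p)"

lemma downclosed:
  fixes D :: "nat set"
  assumes fin: "finite D" and lo: "\<forall>q\<in>D. o0 \<le> q" and dc: "\<forall>q\<in>D. \<forall>q'. o0 \<le> q' \<and> q' < q \<longrightarrow> q' \<in> D"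
  shows "D = {o0..<o0 + card D}"
proof -
  have sub: "D \<subseteq> {o0..<o0 + card D}"
  proof
    fix q assume q: "q \<in> D"
    have "{o0..q} \<subseteq> D" using q dc by (auto simp: le_less)
    hence "card {o0..q} \<le> card D" using fin by (rule card_mono[rotated])
    thus "q \<in> {o0..<o0 + card D}" using lo q by auto
  qed
  moreover have "card {o0..<o0 + card D} = card D" by simp
  ultimately show ?thesis using card_subset_eq[of "{o0..<o0 + card D}" D] by simp
qed


locale zs =
  fixes rs cs :: "nat list" and b :: "nat \<Rightarrow> nat \<Rightarrow> nat"
  assumes len: "length cs = length rs"
    and sumeq: "sum_list cs = sum_list rs"
    and b_row: "\<And>I. I \<le> length rs \<Longrightarrow> b I (length rs) = offs rs I"
    and b_col: "\<And>J. J \<le> length rs \<Longrightarrow> b (length rs) J = offs cs J"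
    and b_0: "\<And>J. b 0 J = 0" and b_0': "\<And>I. b I 0 = 0"
    and b_pos: "\<And>I J. I < length rs \<Longrightarrow> J < length rs \<Longrightarrow> bcount b (Suc I) (Suc J) \<ge> 0"
begin

abbreviation "L \<equiv> length rs"
abbreviation "d \<equiv> sum_list rs"

definition S :: "nat \<Rightarrow> nat \<Rightarrow> int" where "S I J = int (b (Suc I) J) - int (b I J)"
definition off :: "nat \<Rightarrow> nat" where "off p = p - offs rs (blk rs p)"
definition Jf :: "nat \<Rightarrow> nat" where "Jf p = (LEAST J. int (off p) < S (blk rs p) (Suc J))"
definition cnt :: "(nat \<Rightarrow> nat) \<Rightarrow> nat \<Rightarrow> nat \<Rightarrow> nat" where
  "cnt u I J = card {p. p < d \<and> blk rs p = I \<and> blk cs (u p) = J}"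
definition u0 :: "nat \<Rightarrow> nat" where
  "u0 p = (if p < d then card {p'. p' < d \<and> key Jf p' p} else p)"

lemma S_0: "S I 0 = 0" by (simp add: S_def b_0')

lemma S_L: "I < L \<Longrightarrow> S I L = int (rs ! I)"
  by (simp add: S_def b_row offs_Suc)

lemma bcount_S: "bcount b (Suc I) (Suc J) = S I (Suc J) - S I J"
  by (simp add: S_def bcount_def)

lemma S_step: "I < L \<Longrightarrow> J < L \<Longrightarrow> S I J \<le> S I (Suc J)"
  using b_pos[of I J] bcount_S[of I J] by simp

lemma S_mono: assumes I: "I < L" and "J \<le> J'" "J' \<le> L" shows "S I J \<le> S I J'"
  using assms(2,3)
proof (induction J')
  case 0 thus ?case by simp
next
  case (Suc n) show ?case
  proof (cases "J = Suc n")
    case True thus ?thesis by simp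
  next
    case False hence "J \<le> n" using Suc by simp
    thus ?thesis using Suc S_step[OF I, of n] by simp
  qed
qed

lemma S_nonneg: "I < L \<Longrightarrow> J \<le> L \<Longrightarrow> 0 \<le> S I J"
  using S_mono[of I 0 J] S_0 by simp

lemma S_le: "I < L \<Longrightarrow> J \<le> L \<Longrightarrow> S I J \<le> int (rs ! I)"
  using S_mono[of I J L] S_L by simp

lemma off_lt: "p < d \<Longrightarrow> off p < rs ! (blk rs p)"
proof -
  assume p: "p < d"
  have "offs rs (blk rs p) \<le> p" "p < offs rs (blk rs p) + rs ! (blk rs p)"
    using blk_in[OF p] offs_Suc[of "blk rs p" rs] blk_lt_len[OF p] by auto
  thus ?thesis unfolding off_def by linarith
qed

lemma Jf_less:
  assumes p: "p < d" and J: "J \<le> L"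
  shows "Jf p < J \<longleftrightarrow> int (off p) < S (blk rs p) J"
proof -
  define I where "I = blk rs p"
  have I: "I < L" unfolding I_def using blk_lt_len[OF p] .
  have L0: "L = Suc (L - 1)" using I by simp
  have ex: "int (off p) < S I (Suc (L - 1))" using off_lt[OF p] S_L[OF I] L0 unfolding I_def by simp
  have P: "int (off p) < S I (Suc (Jf p))" unfolding Jf_def I_def[symmetric] by (rule LeastI[of _ "L - 1"]) (rule ex)
  show ?thesis
  proof
    assume "Jf p < J"
    hence "S I (Suc (Jf p)) \<le> S I J" using S_mono[OF I, of "Suc (Jf p)" J] J by simp
    thus "int (off p) < S (blk rs p) J" using P unfolding I_def by simp
  next
    assume h: "int (off p) < S (blk rs p) J"
    then obtain J' where J': "J = Suc J'" using S_0 by (cases J) auto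
    have "Jf p \<le> J'" unfolding Jf_def by (rule Least_le) (use h J' in simp)
    thus "Jf p < J" using J' by simp
  qed
qed

lemma Jf_lt_L: "p < d \<Longrightarrow> Jf p < L"
  using Jf_less[of p L] off_lt[of p] S_L[of "blk rs p"] blk_lt_len[of p rs] by simp

lemma block_set: "I < L \<Longrightarrow> {p. p < d \<and> blk rs p = I} = {offs rs I..<offs rs (Suc I)}"
proof (rule Set.set_eqI)
  fix p
  show "p \<in> {p. p < d \<and> blk rs p = I} \<longleftrightarrow> p \<in> {offs rs I..<offs rs (Suc I)}"
  proof
    assume "p \<in> {p. p < d \<and> blk rs p = I}"
    hence "p < d" "blk rs p = I" by auto
    thus "p \<in> {offs rs I..<offs rs (Suc I)}" using blk_in[of p rs] by auto
  next
    assume h: "p \<in> {offs rs I..<offs rs (Suc I)}"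
    hence "p < d" using offs_le_sum[of rs "Suc I"] by auto
    moreover have "blk rs p = I" using h blk_eqI[of rs I p] by auto
    ultimately show "p \<in> {p. p < d \<and> blk rs p = I}" by simp
  qed
qed

lemma cntJ:
  assumes I: "I < L" and J: "J \<le> L"
  shows "int (card {p. p < d \<and> blk rs p = I \<and> Jf p < J}) = S I J"
proof -
  have "{p. p < d \<and> blk rs p = I \<and> Jf p < J} = {offs rs I..<offs rs I + nat (S I J)}"
  proof -
    have "{p. p < d \<and> blk rs p = I \<and> Jf p < J} = {p \<in> {p. p < d \<and> blk rs p = I}. int (off p) < S I J}"
      using Jf_less[OF _ J] by auto
    also have "... = {p \<in> {offs rs I..<offs rs (Suc I)}. int (off p) < S I J}"
      unfolding block_set[OF I] by simp
    also have "... = {p \<in> {offs rs I..<offs rs (Suc I)}. int (p - offs rs I) < S I J}"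
      by (rule Collect_cong) (auto simp: off_def blk_eqI[of rs I])
    also have "... = {offs rs I..<offs rs I + nat (S I J)}"
      using S_nonneg[OF I J] S_le[OF I J] offs_Suc[of I rs] I by auto
    finally show ?thesis .
  qed
  thus ?thesis using S_nonneg[OF I J] by simp
qed

lemma cnt_Jf:
  assumes I: "I < L" and J: "J < L"
  shows "int (card {p. p < d \<and> blk rs p = I \<and> Jf p = J}) = bcount b (Suc I) (Suc J)"
proof -
  have "{p. p < d \<and> blk rs p = I \<and> Jf p < Suc J} = {p. p < d \<and> blk rs p = I \<and> Jf p < J} \<union> {p. p < d \<and> blk rs p = I \<and> Jf p = J}"
    by auto
  moreover have "card ({p. p < d \<and> blk rs p = I \<and> Jf p < J} \<union> {p. p < d \<and> blk rs p = I \<and> Jf p = J}) =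
     card {p. p < d \<and> blk rs p = I \<and> Jf p < J} + card {p. p < d \<and> blk rs p = I \<and> Jf p = J}"
    by (rule card_Un_disjoint) auto
  ultimately show ?thesis using cntJ[OF I, of "Suc J"] cntJ[OF I, of J] J bcount_S[of I J] by simp
qed

lemma col_total:
  assumes J: "J \<le> L"
  shows "card {p. p < d \<and> Jf p < J} = offs cs J"
proof -
  have "card {p. p < d \<and> Jf p < J} = card {p. (p < d \<and> Jf p < J) \<and> blk rs p < L}"
    using blk_lt_len[of _ rs] by (metis (lifting))
  also have "... = (\<Sum>I<L. card {p. (p < d \<and> Jf p < J) \<and> blk rs p = I})"
    by (rule card_less_sum) auto
  finally have "int (card {p. p < d \<and> Jf p < J}) = (\<Sum>I<L. int (card {p. p < d \<and> blk rs p = I \<and> Jf p < J}))"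
    by (simp add: conj_ac)
  also have "... = (\<Sum>I<L. S I J)" by (rule sum.cong) (use cntJ J in auto)
  also have "... = int (b L J) - int (b 0 J)" unfolding S_def by (rule sum_lessThan_telescope)
  finally show ?thesis using b_col[OF J] b_0 by simp
qed

lemma key_trans: "key J a b' \<Longrightarrow> key J b' c \<Longrightarrow> key J a c" unfolding key_def by auto

lemma u0_key:
  assumes p1: "p1 < d" and p2: "p2 < d" and k: "key Jf p1 p2"
  shows "u0 p1 < u0 p2"
proof -
  have "{p'. p' < d \<and> key Jf p' p1} \<subset> {p'. p' < d \<and> key Jf p' p2}"
  proof
    show "{p'. p' < d \<and> key Jf p' p1} \<subseteq> {p'. p' < d \<and> key Jf p' p2}" using k key_trans by blast
    show "{p'. p' < d \<and> key Jf p' p1} \<noteq> {p'. p' < d \<and> key Jf p' p2}" using k p1 by (auto simp: key_def)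
  qed
  hence "card {p'. p' < d \<and> key Jf p' p1} < card {p'. p' < d \<and> key Jf p' p2}"
    by (rule psubset_card_mono[rotated]) auto
  thus ?thesis using p1 p2 by (simp add: u0_def)
qed

lemma u0_lt: "p < d \<Longrightarrow> u0 p < d"
proof -
  assume p: "p < d"
  have "{p'. p' < d \<and> key Jf p' p} \<subset> {..<d}" using p by (auto simp: key_def)
  hence "card {p'. p' < d \<and> key Jf p' p} < card {..<d::nat}" by (rule psubset_card_mono[rotated]) auto
  thus ?thesis using p by (simp add: u0_def)
qed

lemma key_total: "p1 \<noteq> p2 \<Longrightarrow> key J p1 p2 \<or> key J p2 p1" unfolding key_def by auto

lemma u0_inj: "inj_on u0 {..<d}"
proof (rule inj_onI, rule ccontr)
  fix p1 p2 assume h: "p1 \<in> {..<d}" "p2 \<in> {..<d}" "u0 p1 = u0 p2" "p1 \<noteq> p2"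
  thus False using key_total[OF h(4), of Jf] u0_key[of p1 p2] u0_key[of p2 p1] by auto
qed

lemma u0_perm: "u0 permutes {..<d}"
proof -
  have "u0 ` {..<d} = {..<d}" by (rule endo_inj_surj) (use u0_lt u0_inj in auto)
  hence "bij_betw u0 {..<d} {..<d}" using u0_inj by (simp add: bij_betw_def)
  thus ?thesis by (rule bij_imp_permutes) (simp add: u0_def)
qed

lemma u0_blk: assumes p: "p < d" shows "blk cs (u0 p) = Jf p"
proof -
  have J: "Jf p < L" by (rule Jf_lt_L[OF p])
  have "{p'. p' < d \<and> Jf p' < Jf p} \<subseteq> {p'. p' < d \<and> key Jf p' p}" by (auto simp: key_def)
  hence "card {p'. p' < d \<and> Jf p' < Jf p} \<le> card {p'. p' < d \<and> key Jf p' p}" by (rule card_mono[rotated]) auto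
  hence lo: "offs cs (Jf p) \<le> u0 p" using col_total[of "Jf p"] J p by (simp add: u0_def)
  have "{p'. p' < d \<and> key Jf p' p} \<subset> {p'. p' < d \<and> Jf p' < Suc (Jf p)}" using p by (auto simp: key_def)
  hence "card {p'. p' < d \<and> key Jf p' p} < card {p'. p' < d \<and> Jf p' < Suc (Jf p)}" by (rule psubset_card_mono[rotated]) auto
  hence hi: "u0 p < offs cs (Suc (Jf p))" using col_total[of "Suc (Jf p)"] J p by (simp add: u0_def)
  have "u0 p < sum_list cs" using u0_lt[OF p] sumeq by simp
  thus ?thesis using lo hi blockset_iff[of "u0 p" cs "Jf p"] unfolding blockset_def by auto
qed

lemma Jf_mono:
  assumes "p \<le> p'" "p' < d" "blk rs p = blk rs p'"
  shows "Jf p \<le> Jf p'"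
proof -
  have p: "p < d" using assms by simp
  have J: "Suc (Jf p') \<le> L" using Jf_lt_L[OF assms(2)] by simp
  have "int (off p') < S (blk rs p') (Suc (Jf p'))" using Jf_less[OF assms(2) J] by simp
  moreover have "off p \<le> off p'" using assms by (simp add: off_def)
  ultimately have "int (off p) < S (blk rs p) (Suc (Jf p'))" using assms(3) by simp
  thus ?thesis using Jf_less[OF p J] by simp
qed

lemma solI:
  assumes perm: "u permutes {..<d}"
    and cn: "\<And>I J. I < L \<Longrightarrow> J < L \<Longrightarrow> int (cnt u I J) = bcount b (Suc I) (Suc J)"
    and rm: "\<And>p p'. p < p' \<Longrightarrow> p' < d \<Longrightarrow> blk rs p = blk rs p' \<Longrightarrow> u p < u p'"
    and cm: "\<And>p p'. p < d \<Longrightarrow> p' < d \<Longrightarrow> blk cs (u p) = blk cs (u p') \<Longrightarrow> u p < u p' \<Longrightarrow> p < p'"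
  shows "zel_cond rs cs b u"
  unfolding zel_cond_def
proof (intro conjI ballI allI impI)
  show "u permutes {..<d}" by (rule perm)
  have ud: "p < d \<Longrightarrow> u p < sum_list cs" for p using permutes_in_image[OF perm, of p] sumeq by simp
  fix I J assume I: "I \<in> {1..L}" and J: "J \<in> {1..length cs}"
  have "{p \<in> blockset rs (I - 1). u p \<in> blockset cs (J - 1)} = {p. p < d \<and> blk rs p = I - 1 \<and> blk cs (u p) = J - 1}"
  proof -
    have e1: "p \<in> blockset rs I' \<longleftrightarrow> p < d \<and> blk rs p = I'" for p I'
      using blockset_lt[of p rs I'] blockset_iff[of p rs I'] by blast
    have e2: "p < d \<Longrightarrow> u p \<in> blockset cs J' \<longleftrightarrow> blk cs (u p) = J'" for p J'
      using blockset_iff[of "u p" cs J'] ud[of p] by blast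
    show ?thesis using e1 e2 by blast
  qed
  moreover have "I - 1 < L" "J - 1 < L" "Suc (I - 1) = I" "Suc (J - 1) = J" using I J len by auto
  ultimately show "int (card {p \<in> blockset rs (I - 1). u p \<in> blockset cs (J - 1)}) = bcount b I J"
    using cn[of "I - 1" "J - 1"] unfolding cnt_def by simp
next
  fix I p p' assume h: "I < L" "p \<in> blockset rs I" "p' \<in> blockset rs I" "p < p'"
  have "p' < d" using blockset_lt[OF h(3)] .
  moreover have "blk rs p = I" "blk rs p' = I"
    using blockset_iff[of p rs I] blockset_iff[of p' rs I] blockset_lt[OF h(2)] blockset_lt[OF h(3)] h by auto
  ultimately show "u p < u p'" using rm[OF h(4)] by simp
next
  have ud: "p < d \<Longrightarrow> u p < sum_list cs" for p using permutes_in_image[OF perm, of p] sumeq by simp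
  fix J p p' assume h: "J < length cs" "p < d" "p' < d" "u p \<in> blockset cs J \<and> u p' \<in> blockset cs J \<and> u p < u p'"
  have "blk cs (u p) = J" "blk cs (u p') = J"
    using blockset_iff[OF ud[OF h(2)], of J] blockset_iff[OF ud[OF h(3)], of J] h(4) by auto
  thus "p < p'" using cm[OF h(2,3)] h(4) by simp
qed

lemma solD:
  assumes "zel_cond rs cs b u"
  shows "u permutes {..<d}"
    and "\<And>I J. I < L \<Longrightarrow> J < L \<Longrightarrow> int (cnt u I J) = bcount b (Suc I) (Suc J)"
    and "\<And>p p'. p < p' \<Longrightarrow> p' < d \<Longrightarrow> blk rs p = blk rs p' \<Longrightarrow> u p < u p'"
    and "\<And>p p'. p < d \<Longrightarrow> p' < d \<Longrightarrow> blk cs (u p) = blk cs (u p') \<Longrightarrow> u p < u p' \<Longrightarrow> p < p'"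
proof -
  have z1: "u permutes {..<d}"
    and z2: "\<And>I J. I\<in>{1..L} \<Longrightarrow> J\<in>{1..length cs} \<Longrightarrow>
        int (card {p \<in> blockset rs (I-1). u p \<in> blockset cs (J-1)}) = bcount b I J"
    and z3: "\<And>I p p'. I<L \<Longrightarrow> p\<in>blockset rs I \<Longrightarrow> p'\<in>blockset rs I \<Longrightarrow> p < p' \<Longrightarrow> u p < u p'"
    and z4: "\<And>J p p'. J<length cs \<Longrightarrow> p<d \<Longrightarrow> p'<d \<Longrightarrow>
        u p \<in> blockset cs J \<Longrightarrow> u p' \<in> blockset cs J \<Longrightarrow> u p < u p' \<Longrightarrow> p < p'"
    using assms unfolding zel_cond_def by blast+
  show perm: "u permutes {..<d}" by (rule z1)
  have ud: "p < d \<Longrightarrow> u p < sum_list cs" for p using permutes_in_image[OF perm, of p] sumeq by simp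
  show "int (cnt u I J) = bcount b (Suc I) (Suc J)" if "I < L" "J < L" for I J
  proof -
    have "{p \<in> blockset rs I. u p \<in> blockset cs J} = {p. p < d \<and> blk rs p = I \<and> blk cs (u p) = J}"
    proof -
      have e1: "p \<in> blockset rs I' \<longleftrightarrow> p < d \<and> blk rs p = I'" for p I'
        using blockset_lt[of p rs I'] blockset_iff[of p rs I'] by blast
      have e2: "p < d \<Longrightarrow> u p \<in> blockset cs J' \<longleftrightarrow> blk cs (u p) = J'" for p J'
        using blockset_iff[of "u p" cs J'] ud[of p] by blast
      show ?thesis using e1 e2 by blast
    qed
    moreover have "Suc I \<in> {1..L}" "Suc J \<in> {1..length cs}" using that len by auto
    ultimately show ?thesis using z2[of "Suc I" "Suc J"] unfolding cnt_def by simp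
  qed
  show "u p < u p'" if h: "p < p'" "p' < d" "blk rs p = blk rs p'" for p p'
  proof -
    have pd: "p < d" using h by simp
    have "p \<in> blockset rs (blk rs p)" "p' \<in> blockset rs (blk rs p)"
      using blockset_iff[OF pd] blockset_iff[OF h(2)] h(3) by auto
    moreover have "blk rs p < L" using blk_lt_len[OF pd] .
    ultimately show ?thesis using z3 h(1) by blast
  qed
  show "p < p'" if h: "p < d" "p' < d" "blk cs (u p) = blk cs (u p')" "u p < u p'" for p p'
  proof -
    have "u p \<in> blockset cs (blk cs (u p))" "u p' \<in> blockset cs (blk cs (u p))"
      using blockset_iff[OF ud[OF h(1)]] blockset_iff[OF ud[OF h(2)]] h(3) by auto
    moreover have "blk cs (u p) < length cs" using ud[OF h(1)] blk_lt_len by blast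
    ultimately show ?thesis using z4 h by blast
  qed
qed

lemma u0_sol: "zel_cond rs cs b u0"
proof (rule solI)
  show "u0 permutes {..<d}" by (rule u0_perm)
next
  fix I J assume "I < L" "J < L"
  have "{p. p < d \<and> blk rs p = I \<and> blk cs (u0 p) = J} = {p. p < d \<and> blk rs p = I \<and> Jf p = J}"
    using u0_blk by auto
  thus "int (cnt u0 I J) = bcount b (Suc I) (Suc J)" unfolding cnt_def using cnt_Jf[OF \<open>I < L\<close> \<open>J < L\<close>] by simp
next
  fix p p' assume "p < p'" "p' < d" "blk rs p = blk rs p'"
  hence "Jf p \<le> Jf p'" using Jf_mono[of p p'] by simp
  hence "key Jf p p'" using \<open>p < p'\<close> unfolding key_def by linarith
  moreover have "p < d" using \<open>p < p'\<close> \<open>p' < d\<close> by simp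
  ultimately show "u0 p < u0 p'" using u0_key \<open>p' < d\<close> by simp
next
  fix p p' assume h: "p < d" "p' < d" "blk cs (u0 p) = blk cs (u0 p')" "u0 p < u0 p'"
  show "p < p'"
  proof (rule ccontr)
    assume "\<not> p < p'"
    moreover have "p \<noteq> p'" using h by auto
    ultimately have "p' < p" by simp
    moreover have "Jf p = Jf p'" using h u0_blk[of p] u0_blk[of p'] by simp
    ultimately have "key Jf p' p" unfolding key_def by simp
    thus False using u0_key[of p' p] h by simp
  qed
qed


lemma sol_unique:
  assumes sol: "zel_cond rs cs b u" and p: "p < d"
  shows "u p = u0 p"
proof -
  note perm = solD(1)[OF sol]
  note rm = solD(3)[OF sol] and cm = solD(4)[OF sol]
  have ud: "q < d \<Longrightarrow> u q < d" for q using permutes_in_image[OF perm, of q] by simp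
  have udc: "q < d \<Longrightarrow> u q < sum_list cs" for q using ud sumeq by simp
  have Ju_lt: "q < d \<Longrightarrow> blk cs (u q) < L" for q using blk_lt_len[OF udc] len by simp
  have U1: "blk cs (u q) < J \<longleftrightarrow> int (off q) < S (blk rs q) J" if q: "q < d" and J: "J \<le> L" for q J
  proof -
    define I where "I = blk rs q"
    have I: "I < L" unfolding I_def using blk_lt_len[OF q] .
    define D where "D = {p'. p' < d \<and> blk rs p' = I \<and> blk cs (u p') < J}"
    have finD: "finite D" unfolding D_def by auto
    have "card D = (\<Sum>J'<J. card {p'. (p' < d \<and> blk rs p' = I) \<and> blk cs (u p') = J'})"
      unfolding D_def using card_less_sum[of "\<lambda>p'. p' < d \<and> blk rs p' = I" "\<lambda>p'. blk cs (u p')" J]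
      by (simp add: conj_assoc)
    hence "int (card D) = (\<Sum>J'<J. int (cnt u I J'))" unfolding cnt_def by (simp add: conj_assoc)
    also have "... = (\<Sum>J'<J. bcount b (Suc I) (Suc J'))" by (rule sum.cong) (use solD(2)[OF sol] I J in auto)
    also have "... = S I J" using tele1[of b I J] b_0' unfolding S_def by simp
    finally have cD: "int (card D) = S I J" .
    have lo: "\<forall>x\<in>D. offs rs I \<le> x" unfolding D_def using blk_in[of _ rs] by auto
    have dc: "\<forall>x\<in>D. \<forall>x'. offs rs I \<le> x' \<and> x' < x \<longrightarrow> x' \<in> D"
    proof (intro ballI allI impI)
      fix x x' assume x: "x \<in> D" and x': "offs rs I \<le> x' \<and> x' < x"
      have xd: "x < d" "blk rs x = I" "blk cs (u x) < J" using x unfolding D_def by auto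
      have "x < offs rs (Suc I)" using blk_in[of x rs] xd by simp
      hence bx': "blk rs x' = I" using x' by (intro blk_eqI) auto
      have "u x' < u x" using rm[of x' x] x' xd bx' by simp
      hence "blk cs (u x') \<le> blk cs (u x)" using blk_mono[of "u x'" "u x" cs] udc[OF xd(1)] by simp
      thus "x' \<in> D" unfolding D_def using xd bx' x' by auto
    qed
    have De: "D = {offs rs I..<offs rs I + card D}" by (rule downclosed[OF finD lo dc])
    have a1: "q \<in> D \<longleftrightarrow> blk cs (u q) < J" unfolding D_def using q I_def by simp
    have qo: "offs rs I \<le> q" using blk_in[OF q] I_def by simp
    have "q \<in> D \<longleftrightarrow> q < offs rs I + card D" using De qo by (metis atLeastLessThan_iff)
    also have "... \<longleftrightarrow> off q < card D" using qo unfolding off_def I_def by linarith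
    also have "... \<longleftrightarrow> int (off q) < S I J" using cD by linarith
    finally show ?thesis using a1 I_def by simp
  qed
  have JJ: "blk cs (u q) = Jf q" if q: "q < d" for q
  proof -
    have x: "blk cs (u q) < L" "Jf q < L" using Ju_lt[OF q] Jf_lt_L[OF q] by auto
    have "blk cs (u q) < Suc (Jf q)" using U1[OF q, of "Suc (Jf q)"] Jf_less[OF q, of "Suc (Jf q)"] x by simp
    moreover have "Jf q < Suc (blk cs (u q))" using U1[OF q, of "Suc (blk cs (u q))"] Jf_less[OF q, of "Suc (blk cs (u q))"] x by simp
    ultimately show ?thesis by simp
  qed
  have inj: "inj u" using permutes_inj[OF perm] .
  have U2: "key Jf p' p \<longleftrightarrow> u p' < u p" if p': "p' < d" for p'
  proof
    assume k: "key Jf p' p"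
    show "u p' < u p"
    proof (cases "Jf p' < Jf p")
      case True
      show ?thesis
      proof (rule ccontr)
        assume "\<not> u p' < u p"
        hence "blk cs (u p) \<le> blk cs (u p')" using blk_mono[of "u p" "u p'" cs] udc[OF p'] by simp
        thus False using True JJ[OF p] JJ[OF p'] by simp
      qed
    next
      case False
      hence e: "Jf p' = Jf p" "p' < p" using k unfolding key_def by auto
      have "u p' \<noteq> u p" using e(2) inj by (metis inj_eq less_irrefl)
      moreover have "\<not> u p < u p'" using cm[OF p p'] e JJ[OF p] JJ[OF p'] by auto
      ultimately show ?thesis by simp
    qed
  next
    assume l: "u p' < u p"
    have "blk cs (u p') \<le> blk cs (u p)" using blk_mono[of "u p'" "u p" cs] udc[OF p] l by simp
    moreover have "blk cs (u p') = blk cs (u p) \<Longrightarrow> p' < p" using cm[OF p' p] l by simp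
    ultimately show "key Jf p' p" unfolding key_def using JJ[OF p] JJ[OF p'] by auto
  qed
  have "{p'. p' < d \<and> key Jf p' p} = {p'. p' < d \<and> u p' < u p}" using U2 by blast
  hence "u0 p = card {p'. p' < d \<and> u p' < u p}" unfolding u0_def using p by simp
  also have "... = card (u ` {p'. p' < d \<and> u p' < u p})" using inj by (simp add: card_image inj_on_subset)
  also have "u ` {p'. p' < d \<and> u p' < u p} = {..<u p}"
  proof
    show "u ` {p'. p' < d \<and> u p' < u p} \<subseteq> {..<u p}" by auto
    show "{..<u p} \<subseteq> u ` {p'. p' < d \<and> u p' < u p}"
    proof
      fix q assume q: "q \<in> {..<u p}"
      hence "q \<in> u ` {..<d}" using permutes_image[OF perm] ud[OF p] by auto
      then obtain p' where "p' < d" "q = u p'" by auto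
      thus "q \<in> u ` {p'. p' < d \<and> u p' < u p}" using q by auto
    qed
  qed
  finally show ?thesis by simp
qed

lemma sol_eq: "zel_cond rs cs b u \<Longrightarrow> u = u0"
proof
  fix p assume sol: "zel_cond rs cs b u"
  show "u p = u0 p"
  proof (cases "p < d")
    case True thus ?thesis using sol_unique[OF sol] by simp
  next
    case False thus ?thesis using permutes_not_in[OF solD(1)[OF sol], of p] by (simp add: u0_def)
  qed
qed

lemma the_sol: "(THE u. zel_cond rs cs b u) = u0"
  using u0_sol sol_eq by (rule the_equality)

lemma pref_count:
  assumes perm: "u permutes {..<d}"
  shows "card {p. p < offs rs I \<and> u p < offs cs J} = (\<Sum>I'<I. \<Sum>J'<J. cnt u I' J')"
proof -
  have udc: "q < d \<Longrightarrow> u q < sum_list cs" for q using permutes_in_image[OF perm, of q] sumeq by simp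
  have "{p. p < offs rs I \<and> u p < offs cs J} = {p. (p < d \<and> blk cs (u p) < J) \<and> blk rs p < I}"
  proof (rule Collect_cong)
    fix p
    show "(p < offs rs I \<and> u p < offs cs J) = ((p < d \<and> blk cs (u p) < J) \<and> blk rs p < I)"
    proof (cases "p < d")
      case True thus ?thesis using blk_less[OF True] blk_less[OF udc[OF True]] by auto
    next
      case False thus ?thesis using offs_le_sum[of rs I] by auto
    qed
  qed
  hence "card {p. p < offs rs I \<and> u p < offs cs J} = (\<Sum>I'<I. card {p. (p < d \<and> blk cs (u p) < J) \<and> blk rs p = I'})"
    using card_less_sum[of "\<lambda>p. p < d \<and> blk cs (u p) < J" "blk rs" I] by simp
  also have "... = (\<Sum>I'<I. \<Sum>J'<J. cnt u I' J')"
  proof (rule sum.cong)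
    fix I' assume "I' \<in> {..<I}"
    have "card {p. (p < d \<and> blk cs (u p) < J) \<and> blk rs p = I'} = card {p. (p < d \<and> blk rs p = I') \<and> blk cs (u p) < J}"
      by (metis (lifting) conj_ac)
    also have "... = (\<Sum>J'<J. card {p. (p < d \<and> blk rs p = I') \<and> blk cs (u p) = J'})"
      by (rule card_less_sum) simp
    finally show "card {p. (p < d \<and> blk cs (u p) < J) \<and> blk rs p = I'} = (\<Sum>J'<J. cnt u I' J')"
      unfolding cnt_def by (simp add: conj_assoc)
  qed simp
  finally show ?thesis .
qed

lemma Npref:
  assumes sol: "zel_cond rs cs b u" and I: "I \<le> L" and J: "J \<le> L"
  shows "card {p. p < offs rs I \<and> u p < offs cs J} = b I J"
proof -
  have "int (card {p. p < offs rs I \<and> u p < offs cs J}) = (\<Sum>I'<I. \<Sum>J'<J. int (cnt u I' J'))"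
    using pref_count[OF solD(1)[OF sol]] by simp
  also have "... = (\<Sum>I'<I. \<Sum>J'<J. bcount b (Suc I') (Suc J'))"
    by (intro sum.cong refl) (use solD(2)[OF sol] I J in auto)
  also have "... = int (b I J)" using tele2[of b J I] b_0 b_0' by simp
  finally show ?thesis by simp
qed

lemma inv_count:
  assumes sol: "zel_cond rs cs b u" and j: "j < d"
  shows "int (card {i. i < j \<and> u j < u i}) = int (b (blk rs j) L) - int (b (blk rs j) (Suc (blk cs (u j))))"
proof -
  note perm = solD(1)[OF sol]
  note rm = solD(3)[OF sol] and cm = solD(4)[OF sol]
  have ud: "q < d \<Longrightarrow> u q < d" for q using permutes_in_image[OF perm, of q] by simp
  have udc: "q < d \<Longrightarrow> u q < sum_list cs" for q using ud sumeq by simp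
  define I where "I = blk rs j"
  define J where "J = blk cs (u j)"
  have I: "I < L" unfolding I_def using blk_lt_len[OF j] .
  have Jl: "J < L" unfolding J_def using blk_lt_len[OF udc[OF j]] len by simp
  have oL: "offs cs L = d" using offs_ge[of cs L] len sumeq by simp
  define A where "A = {i. i < offs rs I \<and> u i < offs cs L}"
  define B where "B = {i. i < offs rs I \<and> u i < offs cs (Suc J)}"
  have eq: "{i. i < j \<and> u j < u i} = A - B"
  proof (rule Set.set_eqI, rule iffI)
    fix i assume h: "i \<in> {i. i < j \<and> u j < u i}"
    hence ij: "i < j" "u j < u i" by auto
    have id: "i < d" using ij j by simp
    have "blk rs i \<le> I" unfolding I_def using blk_mono[of i j rs] ij j by simp
    moreover have "blk rs i \<noteq> I" using rm[of i j] ij j I_def by auto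
    ultimately have "i < offs rs I" using blk_less[OF id] by simp
    moreover have "u i < offs cs L" using ud[OF id] oL by simp
    moreover have "\<not> u i < offs cs (Suc J)"
    proof
      assume "u i < offs cs (Suc J)"
      hence "blk cs (u i) \<le> J" using blk_less[OF udc[OF id]] by simp
      moreover have "J \<le> blk cs (u i)" unfolding J_def using blk_mono[of "u j" "u i" cs] udc[OF id] ij by simp
      ultimately have "blk cs (u j) = blk cs (u i)" unfolding J_def by simp
      thus False using cm[OF j id] ij by simp
    qed
    ultimately show "i \<in> A - B" unfolding A_def B_def by auto
  next
    fix i assume h: "i \<in> A - B"
    hence i1: "i < offs rs I" and i2: "\<not> u i < offs cs (Suc J)" unfolding A_def B_def using oL ud
      by auto
    have id: "i < d" using i1 offs_le_sum[of rs I] by simp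
    have "blk rs i < I" using blk_less[OF id] i1 by simp
    hence "i < j" unfolding I_def using blk_mono[of j i rs] id by (metis not_le)
    moreover have "u j < offs cs (Suc J)" unfolding J_def using blk_in[OF udc[OF j]] by simp
    ultimately show "i \<in> {i. i < j \<and> u j < u i}" using i2 by simp
  qed
  have BA: "B \<subseteq> A" unfolding A_def B_def using oL ud offs_le_sum[of rs I] by auto
  have finA: "finite A" unfolding A_def by auto
  have cA: "card A = b I L" unfolding A_def by (rule Npref[OF sol]) (use I in auto)
  have cB: "card B = b I (Suc J)" unfolding B_def by (rule Npref[OF sol]) (use I Jl in auto)
  have "card (A - B) = card A - card B" by (rule card_Diff_subset[OF finite_subset[OF BA finA] BA])
  moreover have "card B \<le> card A" by (rule card_mono[OF finA BA])
  ultimately show ?thesis using eq cA cB I_def J_def by simp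
qed

lemma sum_fiber:
  assumes "finite A" "finite B" "f ` A \<subseteq> B"
  shows "(\<Sum>x\<in>A. h (f x)) = (\<Sum>y\<in>B. of_nat (card {x\<in>A. f x = y}) * (h y :: int))"
proof -
  have "(\<Sum>x\<in>A. h (f x)) = (\<Sum>y\<in>B. \<Sum>x\<in>{x\<in>A. f x = y}. h (f x))"
    using sum.group[OF assms, of "\<lambda>x. h (f x)"] by simp
  also have "... = (\<Sum>y\<in>B. of_nat (card {x\<in>A. f x = y}) * h y)"
    by (rule sum.cong) auto
  finally show ?thesis .
qed

lemma length_blocks:
  assumes sol: "zel_cond rs cs b u"
  shows "int (perm_length d u) = (\<Sum>I<L. \<Sum>J<L. bcount b (Suc I) (Suc J) * (int (b I L) - int (b I (Suc J))))"
proof -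
  note perm = solD(1)[OF sol]
  have udc: "q < d \<Longrightarrow> u q < sum_list cs" for q using permutes_in_image[OF perm, of q] sumeq by simp
  have "{(i, j). i < j \<and> j < d \<and> u j < u i} = (\<lambda>(j,i). (i,j)) ` (SIGMA j:{..<d}. {i. i < j \<and> u j < u i})"
    by auto
  moreover have "inj_on (\<lambda>(j,i). (i,j)) (SIGMA j:{..<d}. {i. i < j \<and> u j < u i})" by (auto simp: inj_on_def)
  ultimately have "perm_length d u = card (SIGMA j:{..<d}. {i. i < j \<and> u j < u i})"
    unfolding perm_length_def by (simp add: card_image)
  also have "... = (\<Sum>j<d. card {i. i < j \<and> u j < u i})" by (rule card_SigmaI) auto
  finally have "int (perm_length d u) = (\<Sum>j<d. int (card {i. i < j \<and> u j < u i}))" by simp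
  also have "... = (\<Sum>j<d. (\<lambda>(I,J). int (b I L) - int (b I (Suc J))) (blk rs j, blk cs (u j)))"
    by (rule sum.cong) (use inv_count[OF sol] in auto)
  also have "... = (\<Sum>y\<in>{..<L} \<times> {..<L}. of_nat (card {x\<in>{..<d}. (blk rs x, blk cs (u x)) = y}) *
      (\<lambda>(I,J). int (b I L) - int (b I (Suc J))) y)"
    by (rule sum_fiber) (use blk_lt_len[of _ rs] blk_lt_len[OF udc] len in auto)
  also have "... = (\<Sum>(I,J)\<in>{..<L} \<times> {..<L}. bcount b (Suc I) (Suc J) * (int (b I L) - int (b I (Suc J))))"
  proof (rule sum.cong)
    fix y assume "y \<in> {..<L} \<times> {..<L}"
    then obtain I J where y: "y = (I,J)" "I < L" "J < L" by auto
    have "{x\<in>{..<d}. (blk rs x, blk cs (u x)) = y} = {p. p < d \<and> blk rs p = I \<and> blk cs (u p) = J}"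
      using y by auto
    thus "of_nat (card {x\<in>{..<d}. (blk rs x, blk cs (u x)) = y}) * (\<lambda>(I,J). int (b I L) - int (b I (Suc J))) y =
       (\<lambda>(I,J). bcount b (Suc I) (Suc J) * (int (b I L) - int (b I (Suc J)))) y"
      using solD(2)[OF sol y(2,3)] y(1) unfolding cnt_def by simp
  qed simp
  also have "... = (\<Sum>I<L. \<Sum>J<L. bcount b (Suc I) (Suc J) * (int (b I L) - int (b I (Suc J))))"
    by (rule sum.cartesian_product[symmetric])
  finally show ?thesis .
qed

lemma length_final:
  assumes sol: "zel_cond rs cs b u" and L: "0 < L"
  shows "int (perm_length d u) = (\<Sum>i=2..L. \<Sum>j=1..L-1. (int (b (i-1) L) - int (b (i-1) j)) * bcount b i j)"
proof -
  define F where "F = (\<lambda>i j. (int (b (i-1) L) - int (b (i-1) j)) * bcount b i j)"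
  have R: "\<And>g::nat\<Rightarrow>int. (\<Sum>j\<in>{1..L}. g j) = (\<Sum>J<L. g (Suc J))"
    by (subst image_Suc_lessThan[symmetric]) (simp add: sum.reindex)
  have "int (perm_length d u) = (\<Sum>I<L. \<Sum>J<L. F (Suc I) (Suc J))"
    unfolding length_blocks[OF sol] F_def by (simp add: mult.commute)
  also have "... = (\<Sum>i\<in>{1..L}. \<Sum>j\<in>{1..L}. F i j)"
    by (simp only: R)
  also have "... = (\<Sum>i\<in>{2..L}. \<Sum>j\<in>{1..L}. F i j)"
    using sum.atLeast_Suc_atMost[of 1 L "\<lambda>i. \<Sum>j\<in>{1..L}. F i j"] L by (simp add: F_def b_0 numeral_2_eq_2)
  also have "... = (\<Sum>i\<in>{2..L}. \<Sum>j\<in>{1..L-1}. F i j)"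
  proof (rule sum.cong)
    fix i assume "i \<in> {2..L}"
    have SL: "Suc (L-1) = L" using L by simp
    have "(\<Sum>j\<in>{1..Suc (L-1)}. F i j) = (\<Sum>j\<in>{1..L-1}. F i j) + F i (Suc (L-1))"
      by (rule trans[OF sum.cl_ivl_Suc]) (use L in simp)
    hence "(\<Sum>j\<in>{1..L}. F i j) = (\<Sum>j\<in>{1..L-1}. F i j) + F i L" by (simp only: SL)
    moreover have "F i L = 0" by (simp add: F_def)
    ultimately show "(\<Sum>j\<in>{1..L}. F i j) = (\<Sum>j\<in>{1..L-1}. F i j)" by simp
  qed simp
  finally show ?thesis unfolding F_def .
qed

lemma ess_corner:
  assumes sol: "zel_cond rs cs b u" and e: "ij \<in> ess d u"
  shows "se_corner rs cs ij"
proof -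
  note perm = solD(1)[OF sol]
  note rm = solD(3)[OF sol] and cm = solD(4)[OF sol]
  have ud: "q < d \<Longrightarrow> u q < d" for q using permutes_in_image[OF perm, of q] by simp
  obtain i j where ij: "ij = (i,j)" by (cases ij)
  have D: "i < d" "j < d" "j < u i" "\<forall>i'\<le>i. u i' \<noteq> j"
    and N1: "(i+1, j) \<notin> diagram d u" and N2: "(i, j+1) \<notin> diagram d u"
    using e unfolding ess_def diagram_def ij by auto
  have dcs: "d = sum_list cs" using sumeq by simp
  define k where "k = blk rs i"
  have k: "k < length rs" "offs rs k \<le> i" "i < offs rs (Suc k)"
    unfolding k_def using blk_lt_len[OF D(1)] blk_in[OF D(1)] by auto
  have r: "i + 1 = offs rs (Suc k)"
  proof (rule ccontr)
    assume "i + 1 \<noteq> offs rs (Suc k)"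
    hence i1: "i + 1 < offs rs (Suc k)" using k by simp
    hence i1d: "i + 1 < d" using offs_le_sum[of rs "Suc k"] by simp
    have "blk rs (i+1) = k" using i1 k by (intro blk_eqI) auto
    hence lt: "u i < u (i+1)" using rm[of i "i+1"] i1d k_def by simp
    have "\<exists>i'\<le>i+1. u i' = j" using N1 i1d D lt unfolding diagram_def by auto
    then obtain i' where "i' \<le> i + 1" "u i' = j" by blast
    hence "u (i+1) = j" using D(4) by (metis le_Suc_eq Suc_eq_plus1)
    thus False using lt D(3) by simp
  qed
  define l where "l = blk cs j"
  have l: "l < length cs" "offs cs l \<le> j" "j < offs cs (Suc l)"
    unfolding l_def using blk_lt_len[of j cs] blk_in[of j cs] D(2) dcs by auto
  have c: "j + 1 = offs cs (Suc l)"
  proof (rule ccontr)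
    assume "j + 1 \<noteq> offs cs (Suc l)"
    hence j1: "j + 1 < offs cs (Suc l)" using l by simp
    hence j1d: "j + 1 < d" using offs_le_sum[of cs "Suc l"] dcs by simp
    have bj1: "blk cs (j+1) = l" using j1 l by (intro blk_eqI) auto
    have "\<exists>i'\<le>i. u i' = j + 1"
    proof (cases "j + 1 < u i")
      case True thus ?thesis using N2 D j1d unfolding diagram_def by auto
    next
      case False thus ?thesis using D(3) by (intro exI[of _ i]) auto
    qed
    then obtain i' where i': "i' \<le> i" "u i' = j + 1" by blast
    have "j \<in> u ` {..<d}" using permutes_image[OF perm] D(2) by auto
    then obtain p where p: "p < d" "u p = j" by auto
    have "i < p" using D(4) p by (metis not_le)
    have "p < i'" using cm[of p i'] p i' bj1 l_def D(1) by simp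
    thus False using \<open>i < p\<close> i' by simp
  qed
  show ?thesis unfolding se_corner_def ij using k l r c len by (auto simp: blockset_def)
qed

definition Inv :: "(nat \<Rightarrow> nat) \<Rightarrow> (nat \<times> nat) set" where
  "Inv u = {(i,j). i < j \<and> j < d \<and> u j < u i}"
definition InvS :: "(nat \<Rightarrow> nat) \<Rightarrow> (nat \<times> nat) set" where
  "InvS u = {(i,j). i < j \<and> j < d \<and> u j < u i \<and> blk rs i \<noteq> blk rs j \<and> blk cs (u i) \<noteq> blk cs (u j)}"

lemma G:
  assumes v1: "v1 permutes {..<d}" and s: "s permutes {..<d}" and t: "t permutes {..<d}"
    and sb: "\<forall>p<d. blk rs (s p) = blk rs p" and tb: "\<forall>q<d. blk cs (t q) = blk cs q"
    and v2: "\<forall>p. v2 p = t (v1 (s p))"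
  shows "card (InvS v2) \<le> card (InvS v1)" and "cnt v2 I J \<le> cnt v1 I J"
proof -
  have sd: "p < d \<Longrightarrow> s p < d" for p using permutes_in_image[OF s, of p] by simp
  have vd: "p < d \<Longrightarrow> v1 p < d" for p using permutes_in_image[OF v1, of p] by simp
  have td: "p < d \<Longrightarrow> t p < d" for p using permutes_in_image[OF t, of p] by simp
  have dcs: "d = sum_list cs" using sumeq by simp
  have injs: "inj s" using permutes_inj[OF s] .
  have bw: "p < d \<Longrightarrow> blk cs (v2 p) = blk cs (v1 (s p))" for p using v2 tb vd sd by simp
  have fin1: "finite (InvS v1)" by (rule finite_subset[of _ "{..<d} \<times> {..<d}"]) (auto simp: InvS_def)
  have "(\<lambda>(i,j). (s i, s j)) ` InvS v2 \<subseteq> InvS v1"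
  proof
    fix x assume "x \<in> (\<lambda>(i,j). (s i, s j)) ` InvS v2"
    then obtain i j where x: "x = (s i, s j)" and m: "(i,j) \<in> InvS v2" by auto
    have h: "i < j" "j < d" "v2 j < v2 i" "blk rs i \<noteq> blk rs j" "blk cs (v2 i) \<noteq> blk cs (v2 j)"
      using m unfolding InvS_def by auto
    have id: "i < d" using h by simp
    have r1: "blk rs (s i) < blk rs (s j)" using sb id h blk_mono[of i j rs] by (simp add: le_less)
    have "s i < s j"
    proof (rule ccontr)
      assume "\<not> s i < s j"
      hence "blk rs (s j) \<le> blk rs (s i)" using blk_mono[of "s j" "s i" rs] sd[OF id] by simp
      thus False using r1 by simp
    qed
    moreover have "v2 i < d" using v2 td vd sd id by simp
    hence c1: "blk cs (v2 j) < blk cs (v2 i)" using h blk_mono[of "v2 j" "v2 i" cs] dcs by (simp add: le_less)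
    have "v1 (s j) < v1 (s i)"
    proof (rule ccontr)
      assume "\<not> v1 (s j) < v1 (s i)"
      hence "blk cs (v1 (s i)) \<le> blk cs (v1 (s j))" using blk_mono[of "v1 (s i)" "v1 (s j)" cs] vd sd h dcs by simp
      thus False using c1 bw[OF id] bw[OF h(2)] by simp
    qed
    moreover have "blk cs (v1 (s i)) \<noteq> blk cs (v1 (s j))" using c1 bw[OF id] bw[OF h(2)] by simp
    moreover have "s j < d" using sd[OF h(2)] .
    moreover have "blk rs (s i) \<noteq> blk rs (s j)" using r1 by simp
    ultimately show "x \<in> InvS v1" unfolding InvS_def x by simp
  qed
  moreover have "inj_on (\<lambda>(i,j). (s i, s j)) (InvS v2)"
  proof (rule inj_onI)
    fix x y assume "(\<lambda>(i,j). (s i, s j)) x = (\<lambda>(i,j). (s i, s j)) y"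
    moreover obtain a1 b1 a2 b2 where "x = (a1,b1)" "y = (a2,b2)" by (cases x, cases y) auto
    ultimately have "s a1 = s a2" "s b1 = s b2" by simp_all
    hence "a1 = a2" "b1 = b2" using injD[OF injs] by blast+
    thus "x = y" using \<open>x = (a1,b1)\<close> \<open>y = (a2,b2)\<close> by simp
  qed
  ultimately show "card (InvS v2) \<le> card (InvS v1)" using card_inj_on_le[OF _ _ fin1] by blast
  have im: "s ` {p. p < d \<and> blk rs p = I \<and> blk cs (v2 p) = J} \<subseteq> {p. p < d \<and> blk rs p = I \<and> blk cs (v1 p) = J}"
  proof
    fix x assume "x \<in> s ` {p. p < d \<and> blk rs p = I \<and> blk cs (v2 p) = J}"
    then obtain p where p: "p < d" "blk rs p = I" "blk cs (v2 p) = J" "x = s p" by blast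
    have "s p < d" using sd[OF p(1)] .
    moreover have "blk rs (s p) = I" using sb p by simp
    moreover have "blk cs (v1 (s p)) = J" using bw[OF p(1)] p(3) by simp
    ultimately show "x \<in> {p. p < d \<and> blk rs p = I \<and> blk cs (v1 p) = J}" using p(4) by simp
  qed
  have ij: "inj_on s {p. p < d \<and> blk rs p = I \<and> blk cs (v2 p) = J}" using inj_on_subset[OF injs] by blast
  have fc: "finite {p. p < d \<and> blk rs p = I \<and> blk cs (v1 p) = J}" by simp
  show "cnt v2 I J \<le> cnt v1 I J" unfolding cnt_def by (rule card_inj_on_le[OF ij im fc])
qed

lemma bp_blk: "block_preserving sz s \<Longrightarrow> p < sum_list sz \<Longrightarrow> blk sz (s p) = blk sz p"
proof -
  assume bp: "block_preserving sz s" and p: "p < sum_list sz"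
  have sp: "s p < sum_list sz"
    using permutes_in_image[of s "{..<sum_list sz}" p] bp p unfolding block_preserving_def by auto
  have "p \<in> blockset sz (blk sz p)" using blockset_iff[OF p] by simp
  hence "s p \<in> blockset sz (blk sz p)" using bp blk_lt_len[OF p] unfolding block_preserving_def by blast
  thus ?thesis using blockset_iff[OF sp] by simp
qed

lemma bp_inv_blk: "block_preserving sz s \<Longrightarrow> p < sum_list sz \<Longrightarrow> blk sz (Hilbert_Choice.inv s p) = blk sz p"
proof -
  assume bp: "block_preserving sz s" and p: "p < sum_list sz"
  have perm: "s permutes {..<sum_list sz}" using bp unfolding block_preserving_def by simp
  have "Hilbert_Choice.inv s p < sum_list sz" using permutes_in_image[OF permutes_inv[OF perm], of p] p by simp
  hence "blk sz (s (Hilbert_Choice.inv s p)) = blk sz (Hilbert_Choice.inv s p)" using bp_blk[OF bp] by blast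
  thus ?thesis using permutes_inverses(1)[OF perm] by simp
qed

lemma dcoset_min:
  assumes sol: "zel_cond rs cs b u" and w: "w \<in> dcoset rs cs u" and ne: "w \<noteq> u"
  shows "perm_length d u < perm_length d w"
proof -
  obtain s t where wst: "w = t \<circ> u \<circ> s" and bs: "block_preserving rs s" and bt: "block_preserving cs t"
    using w unfolding dcoset_def by blast
  have dcs: "d = sum_list cs" using sumeq by simp
  have ps: "s permutes {..<d}" using bs unfolding block_preserving_def by simp
  have pt: "t permutes {..<d}" using bt dcs unfolding block_preserving_def by simp
  have pu: "u permutes {..<d}" by (rule solD(1)[OF sol])
  have pw: "w permutes {..<d}" unfolding wst by (intro permutes_compose ps pt pu)
  have sb: "\<forall>p<d. blk rs (s p) = blk rs p" using bp_blk[OF bs] by simp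
  have tb: "\<forall>q<d. blk cs (t q) = blk cs q" using bp_blk[OF bt] dcs by simp
  have sb': "\<forall>p<d. blk rs (Hilbert_Choice.inv s p) = blk rs p" using bp_inv_blk[OF bs] by simp
  have tb': "\<forall>q<d. blk cs (Hilbert_Choice.inv t q) = blk cs q" using bp_inv_blk[OF bt] dcs by simp
  have w1: "\<forall>p. w p = t (u (s p))" unfolding wst by simp
  have u1: "\<forall>p. u p = Hilbert_Choice.inv t (w (Hilbert_Choice.inv s p))"
    unfolding wst using permutes_inverses[OF ps] permutes_inverses[OF pt] by simp
  note G1 = G[OF pu ps pt sb tb w1]
  note G2 = G[OF pw permutes_inv[OF ps] permutes_inv[OF pt] sb' tb' u1]
  have cnteq: "cnt w I J = cnt u I J" for I J using G1(2)[of I J] G2(2)[of I J] by simp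
  have SU: "InvS u = Inv u"
  proof -
    have "(i,j) \<in> Inv u \<Longrightarrow> (i,j) \<in> InvS u" for i j
    proof -
      assume m: "(i,j) \<in> Inv u"
      hence h: "i < j" "j < d" "u j < u i" unfolding Inv_def by auto
      have "blk rs i \<noteq> blk rs j" using solD(3)[OF sol, of i j] h by auto
      moreover have "blk cs (u i) \<noteq> blk cs (u j)" using solD(4)[OF sol, of j i] h by auto
      ultimately show ?thesis using h unfolding InvS_def by auto
    qed
    thus ?thesis unfolding Inv_def InvS_def by auto
  qed
  have sub: "InvS w \<subseteq> Inv w" unfolding Inv_def InvS_def by auto
  have finw: "finite (Inv w)" by (rule finite_subset[of _ "{..<d} \<times> {..<d}"]) (auto simp: Inv_def)
  have nsub: "\<not> Inv w \<subseteq> InvS w"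
  proof
    assume ws: "Inv w \<subseteq> InvS w"
    have injw: "inj w" using permutes_inj[OF pw] .
    have "zel_cond rs cs b w"
    proof (rule solI[OF pw])
      fix I J assume "I < L" "J < L"
      thus "int (cnt w I J) = bcount b (Suc I) (Suc J)" using cnteq solD(2)[OF sol] by simp
    next
      fix p p' assume h: "p < p'" "p' < d" "blk rs p = blk rs p'"
      show "w p < w p'"
      proof (rule ccontr)
        assume "\<not> w p < w p'"
        moreover have "w p \<noteq> w p'" using injw h(1) by (metis inj_eq less_irrefl)
        ultimately have "(p, p') \<in> Inv w" using h unfolding Inv_def by auto
        thus False using ws h unfolding InvS_def by auto
      qed
    next
      fix p p' assume h: "p < d" "p' < d" "blk cs (w p) = blk cs (w p')" "w p < w p'"
      show "p < p'"
      proof (rule ccontr)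
        assume "\<not> p < p'"
        moreover have "p \<noteq> p'" using h by auto
        ultimately have "(p', p) \<in> Inv w" using h unfolding Inv_def by auto
        thus False using ws h unfolding InvS_def by auto
      qed
    qed
    hence "w = u" using sol_eq sol_eq[OF sol] by simp
    thus False using ne by simp
  qed
  have "InvS w \<subset> Inv w" using sub nsub by blast
  hence "card (InvS w) < card (Inv w)" by (rule psubset_card_mono[OF finw])
  moreover have "card (InvS u) \<le> card (InvS w)" by (rule G2(1))
  moreover have "perm_length d u = card (Inv u)" "perm_length d w = card (Inv w)"
    unfolding perm_length_def Inv_def by simp_all
  ultimately show ?thesis using SU by simp
qed

lemma in_dcoset: "u permutes {..<d} \<Longrightarrow> u \<in> dcoset rs cs u"
proof -
  have "block_preserving rs id" "block_preserving cs id" unfolding block_preserving_def by (auto intro: permutes_id)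
  moreover have "u = id \<circ> u \<circ> id" by simp
  ultimately show ?thesis unfolding dcoset_def by blast
qed

end


definition Zof :: "'a::field itself \<Rightarrow> nat \<Rightarrow> (nat \<Rightarrow> nat) \<Rightarrow> (nat \<Rightarrow> nat) \<Rightarrow> (nat \<Rightarrow> nat \<Rightarrow> nat) \<Rightarrow> 'a mat" where
  "Zof K n dy dx r = (let V = (SOME V. V \<in> (orbit n dy dx r :: ((nat \<Rightarrow> 'a mat) \<times> (nat \<Rightarrow> 'a mat)) set))
     in zeta n dy dx (fst V) (snd V))"

lemma Zof_shape: "zshape (Zof K n dy dx r) (dY n dy) (dX n dx)"
  unfolding Zof_def Let_def by (rule zeta_shape)

lemma rowsz_len: "length (rowsz n dy dx) = 2*n+1" by (simp add: rowsz_def)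
lemma colsz_len: "length (colsz n dy dx) = 2*n+1" by (simp add: colsz_def)
lemma rowsz_sum: "sum_list (rowsz n dy dx) = dY n dy + dX n dx"
  unfolding rowsz_def using sum_dy[of dy n] sum_dx[of dx n] by simp
lemma colsz_sum: "sum_list (colsz n dy dx) = dX n dx + dY n dy"
  unfolding colsz_def using sum_dy[of dy n] sum_dx[of dx n] by simp

lemma bmat_rk:
  fixes K :: "'a::field itself"
  assumes I: "I \<le> 2*n+1" and J: "J \<le> 2*n+1"
  shows "bmat K n dy dx r I J = rk (Zof K n dy dx r) (offs (rowsz n dy dx) I) (offs (colsz n dy dx) J)"
proof (cases "I = 0 \<or> J = 0")
  case True
  hence "bmat K n dy dx r I J = 0" unfolding bmat_def by auto
  moreover have "rk (Zof K n dy dx r) (offs (rowsz n dy dx) I) (offs (colsz n dy dx) J) = 0"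
    using True rk_le_rows[of "Zof K n dy dx r" 0] rk_le_cols[of "Zof K n dy dx r" _ 0] by auto
  ultimately show ?thesis by simp
next
  case False
  thus ?thesis using I J unfolding bmat_def Zof_def topleft_def rk_def subm_def Let_def by simp
qed

lemma zs_inst: "zs (rowsz n dy dx) (colsz n dy dx) (bmat (K::'a::field itself) n dy dx r)"
proof -
  define Z where "Z = Zof K n dy dx r"
  interpret zshape Z "dY n dy" "dX n dx" unfolding Z_def by (rule Zof_shape)
  have br: "I \<le> 2*n+1 \<Longrightarrow> J \<le> 2*n+1 \<Longrightarrow> bmat K n dy dx r I J = rk Z (offs (rowsz n dy dx) I) (offs (colsz n dy dx) J)" for I J
    unfolding Z_def by (rule bmat_rk)
  show ?thesis
  proof
    show "length (colsz n dy dx) = length (rowsz n dy dx)" using rowsz_len colsz_len by simp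
    show "sum_list (colsz n dy dx) = sum_list (rowsz n dy dx)" using rowsz_sum colsz_sum by simp
  next
    fix I assume I: "I \<le> length (rowsz n dy dx)"
    have oc: "offs (colsz n dy dx) (length (rowsz n dy dx)) = dX n dx + dY n dy"
      using offs_ge[of "colsz n dy dx"] colsz_len rowsz_len colsz_sum by simp
    have "offs (rowsz n dy dx) I \<le> dY n dy + dX n dx" using offs_le_sum[of "rowsz n dy dx" I] rowsz_sum by simp
    thus "bmat K n dy dx r I (length (rowsz n dy dx)) = offs (rowsz n dy dx) I"
      using br[of I "length (rowsz n dy dx)"] I rowsz_len oc rk_rows_full by simp
  next
    fix J assume J: "J \<le> length (rowsz n dy dx)"
    have orr: "offs (rowsz n dy dx) (length (rowsz n dy dx)) = dY n dy + dX n dx"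
      using offs_ge[of "rowsz n dy dx"] rowsz_sum by simp
    have "offs (colsz n dy dx) J \<le> dX n dx + dY n dy" using offs_le_sum[of "colsz n dy dx" J] colsz_sum by simp
    thus "bmat K n dy dx r (length (rowsz n dy dx)) J = offs (colsz n dy dx) J"
      using br[of "length (rowsz n dy dx)" J] J rowsz_len orr rk_cols_full by simp
  next
    fix J show "bmat K n dy dx r 0 J = 0" unfolding bmat_def by simp
  next
    fix I show "bmat K n dy dx r I 0 = 0" unfolding bmat_def by simp
  next
    fix I J assume I: "I < length (rowsz n dy dx)" and J: "J < length (rowsz n dy dx)"
    let ?m1 = "offs (rowsz n dy dx) I" and ?m2 = "offs (rowsz n dy dx) (Suc I)"
    let ?k1 = "offs (colsz n dy dx) J" and ?k2 = "offs (colsz n dy dx) (Suc J)"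
    have m: "?m1 \<le> ?m2" and k: "?k1 \<le> ?k2" by (simp_all add: offs_mono)
    have "rk Z ?m2 ?k1 + rk Z ?m1 ?k2 \<le> rk Z ?m2 ?k2 + rk Z ?m1 ?k1" by (rule rk_submod[OF m k])
    thus "bcount (bmat K n dy dx r) (Suc I) (Suc J) \<ge> 0"
      unfolding bcount_def using br[of "Suc I" "Suc J"] br[of I J] br[of "Suc I" J] br[of I "Suc J"] I J rowsz_len
      by simp
  qed
qed

theorem lemma4p10:
  fixes n :: nat and dy dx :: "nat \<Rightarrow> nat" and r :: "nat \<Rightarrow> nat \<Rightarrow> nat"
  assumes "qrank_array TYPE('k::field) n dy dx r"
  defines "v \<equiv> zel TYPE('k) n dy dx r"
    and "b \<equiv> bmat TYPE('k) n dy dx r"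
    and "rs \<equiv> rowsz n dy dx" and "cs \<equiv> colsz n dy dx"
    and "d \<equiv> sum_list (rowsz n dy dx)"
  shows "(v \<in> dcoset rs cs v \<and> (\<forall>w\<in>dcoset rs cs v. w \<noteq> v \<longrightarrow> perm_length d v < perm_length d w))
    \<and> (\<forall>ij\<in>ess d v. se_corner rs cs ij)
    \<and> (int (perm_length d v) =
           (\<Sum>i=2..2*n+1. \<Sum>j=1..2*n. (int (b (i-1) (2*n+1)) - int (b (i-1) j)) * bcount b i j))"
proof -
  interpret Z: zs rs cs b unfolding rs_def cs_def b_def by (rule zs_inst)
  have vu: "v = Z.u0" unfolding v_def zel_def using Z.the_sol unfolding rs_def cs_def b_def .
  have sol: "zel_cond rs cs b v" unfolding vu by (rule Z.u0_sol)
  have dd: "d = sum_list rs" unfolding d_def rs_def ..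
  have L: "length rs = 2*n+1" unfolding rs_def by (rule rowsz_len)
  have p1: "v \<in> dcoset rs cs v" by (rule Z.in_dcoset[OF Z.solD(1)[OF sol]])
  have p2: "\<forall>w\<in>dcoset rs cs v. w \<noteq> v \<longrightarrow> perm_length d v < perm_length d w"
    using Z.dcoset_min[OF sol] dd by simp
  have p3: "\<forall>ij\<in>ess d v. se_corner rs cs ij" using Z.ess_corner[OF sol] dd by simp
  have p4: "int (perm_length d v) =
           (\<Sum>i=2..2*n+1. \<Sum>j=1..2*n. (int (b (i-1) (2*n+1)) - int (b (i-1) j)) * bcount b i j)"
    using Z.length_final[OF sol] L dd by simp
  show ?thesis using p1 p2 p3 p4 by blast
qed

end
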